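(* The shard intersection order $(S_n,\le)$ (for $n\ge 1$) admits a symmetric boolean decomposition $\{P_1,\dots,P_k\}$ with the additional property that each $P_i$ is either contained in or disjoint from the set $S_n(231)$ of $231$-avoiding permutations, and the parts $P_i$ contained in $S_n(231)$ form a symmetric boolean decomposition of the induced subposet $(S_n(231),\le)$ (which is isomorphic to the lattice $NC(n)$ of noncrossing partitions ordered by refinement).
   Context: For $w=w(1)\cdots w(n)\in S_n$ (one-line notation), a descent is an index $i$ with $w(i)>w(i+1)$, and $d(w)$ is the number of descents. The blocks of $w$ are the sets of letters of its maximal decreasing runs (maximal consecutive factors $w(a)>w(a+1)>\cdots>w(b)$); they partition $\{1,\dots,n\}$. Let $V=\{x\in\mathbb R^n:\sum_i x_i=0\}$. The cone $C(w)\subseteq V$ is the set of $x\in V$ such that: (i) $x_i=x_j$ whenever $i,j$ lie in the same block of $w$; (ii) whenever $i<k<j$ with $i,j$ in the same block and $k$ not in that block, $x_k\le x_i$ if $k$ appears to the left of $i$ in $w$, and $x_i\le x_k$ if $k$ appears to the right of $i$ in $w$. The shard intersection order on $S_n$ is defined by $u\le v$ iff $C(v)\subseteq C(u)$; it is a graded poset of rank $n-1$ with $\mathrm{rk}(w)=d(w)$. A permutation $w$ is $231$-avoiding if there are no $i<j<k$ with $w(k)<w(i)<w(j)$. Symmetric boolean decomposition: let $P$ be a graded poset of rank $N$ and $\mathrm B_m$ the boolean lattice of subsets of an $m$-element set. A partition $\{P_1,\dots,P_k\}$ of $P$ is a symmetric boolean decomposition if for each $i$ there is an integer $j$ with $0\le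 j\le N/2$ and a bijection $\rho_i:\mathrm B_{N-2j}\to P_i$ that sends cover relations of $\mathrm B_{N-2j}$ to cover relations of $P$ and sends elements of rank $r$ to elements of rank $j+r$ in $P$. *)

theory Defs
  imports "HOL-Combinatorics.Permutations" Complex_Main
begin

text \<open>Permutations of {1..n} in one-line notation: w i is the letter at position i.\<close>

definition Sn :: "nat \<Rightarrow> (nat \<Rightarrow> nat) set" where
  "Sn n = {w. w permutes {1..n}}"

definition descents :: "nat \<Rightarrow> (nat \<Rightarrow> nat) \<Rightarrow> nat set" where
  "descents n w = {i. 1 \<le> i \<and> i < n \<and> w (i + 1) < w i}"

definition des :: "nat \<Rightarrow> (nat \<Rightarrow> nat) \<Rightarrow> nat" where
  "des n w = card (descents n w)"

text \<open>Letters a and b lie in the same block (maximal decreasing run) of w: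
  every position strictly between their positions (and starting at the smaller one) is a descent.\<close>
definition same_block :: "nat \<Rightarrow> (nat \<Rightarrow> nat) \<Rightarrow> nat \<Rightarrow> nat \<Rightarrow> bool" where
  "same_block n w a b \<longleftrightarrow> a \<in> {1..n} \<and> b \<in> {1..n} \<and>
     (\<forall>t. min (inv w a) (inv w b) \<le> t \<and> t < max (inv w a) (inv w b) \<longrightarrow> t \<in> descents n w)"

text \<open>The cone C(w) inside V = {x in R^n. sum x = 0}; vectors are functions on {1..n}, zero elsewhere.\<close>
definition cone :: "nat \<Rightarrow> (nat \<Rightarrow> nat) \<Rightarrow> (nat \<Rightarrow> real) set" where
  "cone n w = {x. (\<forall>i. i \<notin> {1..n} \<longrightarrow> x i = 0) \<and> (\<Sum>i\<in>{1..n}. x i) = 0 \<and>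
     (\<forall>i j. same_block n w i j \<longrightarrow> x i = x j) \<and>
     (\<forall>i j k. i < k \<and> k < j \<and> same_block n w i j \<and> \<not> same_block n w i k \<and> k \<in> {1..n} \<longrightarrow>
        (inv w k < inv w i \<longrightarrow> x k \<le> x i) \<and> (inv w i < inv w k \<longrightarrow> x i \<le> x k))}"

definition shard_le :: "nat \<Rightarrow> (nat \<Rightarrow> nat) \<Rightarrow> (nat \<Rightarrow> nat) \<Rightarrow> bool" where
  "shard_le n u v \<longleftrightarrow> cone n v \<subseteq> cone n u"

definition avoids231 :: "nat \<Rightarrow> (nat \<Rightarrow> nat) \<Rightarrow> bool" where
  "avoids231 n w \<longleftrightarrow> \<not> (\<exists>i j k. 1 \<le> i \<and> i < j \<and> j < k \<and> k \<le> n \<and> w k < w i \<and> w i < w j)"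

definition Sn231 :: "nat \<Rightarrow> (nat \<Rightarrow> nat) set" where
  "Sn231 n = {w \<in> Sn n. avoids231 n w}"

definition covers :: "'a set \<Rightarrow> ('a \<Rightarrow> 'a \<Rightarrow> bool) \<Rightarrow> 'a \<Rightarrow> 'a \<Rightarrow> bool" where
  "covers P le u v \<longleftrightarrow> u \<in> P \<and> v \<in> P \<and> le u v \<and> u \<noteq> v \<and>
     \<not> (\<exists>z\<in>P. le u z \<and> le z v \<and> z \<noteq> u \<and> z \<noteq> v)"

text \<open>Symmetric boolean decomposition of a graded poset (P, le) of rank N with rank function rk.
  The boolean lattice B_m is Pow {..<m}; its covers are S \<subseteq> T with |T| = |S| + 1.\<close>
definition sym_bool_decomp ::
  "'a set \<Rightarrow> ('a \<Rightarrow> 'a \<Rightarrow> bool) \<Rightarrow> ('a \<Rightarrow> nat) \<Rightarrow> nat \<Rightarrow> 'a set set \<Rightarrow> bool" where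
  "sym_bool_decomp P le rk N Q \<longleftrightarrow>
     \<Union>Q = P \<and> {} \<notin> Q \<and> (\<forall>A\<in>Q. \<forall>B\<in>Q. A \<noteq> B \<longrightarrow> A \<inter> B = {}) \<and>
     (\<forall>A\<in>Q. \<exists>j (\<rho> :: nat set \<Rightarrow> 'a). 2 * j \<le> N \<and>
        bij_betw \<rho> (Pow {..<N - 2 * j}) A \<and>
        (\<forall>S T. S \<subseteq> T \<and> T \<subseteq> {..<N - 2 * j} \<and> card T = card S + 1 \<longrightarrow> covers P le (\<rho> S) (\<rho> T)) \<and>
        (\<forall>S. S \<subseteq> {..<N - 2 * j} \<longrightarrow> rk (\<rho> S) = j + card S))"

end

theory Submission
  imports Defs
begin
lemma Sn_perm: "w \<in> Sn n \<Longrightarrow> w permutes {1..n}" by (simp add: Sn_def)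

definition SBp :: "(nat\<Rightarrow>nat) \<Rightarrow> nat \<Rightarrow> nat \<Rightarrow> bool" where
  "SBp w p q \<longleftrightarrow> (\<forall>t. min p q \<le> t \<and> t < max p q \<longrightarrow> w (t+1) < w t)"

lemma sb_pos:
  assumes "w permutes {1..n}" "p \<in> {1..n}" "q \<in> {1..n}"
  shows "same_block n w (w p) (w q) \<longleftrightarrow> SBp w p q"
proof -
  have i: "inv w (w p) = p" "inv w (w q) = q" using permutes_inverses[OF assms(1)] by auto
  have m: "w p \<in> {1..n}" "w q \<in> {1..n}" using permutes_in_image[OF assms(1)] assms by auto
  show ?thesis using assms(2,3) m unfolding same_block_def i SBp_def descents_def
    by (auto simp: min_def max_def)
qed

lemma sb_inv:
  assumes "w permutes {1..n}"
  shows "same_block n w a b \<longleftrightarrow> a \<in> {1..n} \<and> b \<in> {1..n} \<and> SBp w (inv w a) (inv w b)"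
proof
  assume h: "same_block n w a b"
  hence ab: "a \<in> {1..n}" "b \<in> {1..n}" by (auto simp: same_block_def)
  have "inv w a \<in> {1..n}" "inv w b \<in> {1..n}"
    using ab permutes_in_image[OF assms] permutes_inverses[OF assms] by metis+
  with h ab show "a \<in> {1..n} \<and> b \<in> {1..n} \<and> SBp w (inv w a) (inv w b)"
    using sb_pos[OF assms, of "inv w a" "inv w b"] permutes_inverses[OF assms] by simp
next
  assume h: "a \<in> {1..n} \<and> b \<in> {1..n} \<and> SBp w (inv w a) (inv w b)"
  have "inv w a \<in> {1..n}" "inv w b \<in> {1..n}"
    using h permutes_in_image[OF assms] permutes_inverses[OF assms] by metis+
  with h show "same_block n w a b"
    using sb_pos[OF assms, of "inv w a" "inv w b"] permutes_inverses[OF assms] by simp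
qed

definition asc :: "(nat\<Rightarrow>nat) \<Rightarrow> nat \<Rightarrow> nat" where
  "asc w p = card {s. 1 \<le> s \<and> s < p \<and> w s < w (s+1)}"

lemma asc_mono: "p \<le> q \<Longrightarrow> asc w p \<le> asc w q"
  unfolding asc_def by (rule card_mono) auto

lemma asc_eq: assumes "p \<le> q" "SBp w p q" shows "asc w p = asc w q"
proof -
  have d: "\<And>t. p \<le> t \<Longrightarrow> t < q \<Longrightarrow> w (t+1) < w t"
    using assms unfolding SBp_def by (simp add: min_def max_def)
  have "{s. 1 \<le> s \<and> s < p \<and> w s < w (s+1)} = {s. 1 \<le> s \<and> s < q \<and> w s < w (s+1)}"
  proof (rule set_eqI, rule iffI)
    fix s assume "s \<in> {s. 1 \<le> s \<and> s < p \<and> w s < w (s+1)}"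
    thus "s \<in> {s. 1 \<le> s \<and> s < q \<and> w s < w (s+1)}" using assms(1) by simp
  next
    fix s assume h: "s \<in> {s. 1 \<le> s \<and> s < q \<and> w s < w (s+1)}"
    have "s < p"
    proof (rule ccontr)
      assume "\<not> s < p" hence "w (s+1) < w s" using d h by simp
      thus False using h by simp
    qed
    thus "s \<in> {s. 1 \<le> s \<and> s < p \<and> w s < w (s+1)}" using h by simp
  qed
  thus ?thesis unfolding asc_def by simp
qed

lemma asc_less: assumes "p < q" "\<not> SBp w p q" "inj w" "1 \<le> p" shows "asc w p < asc w q"
proof -
  have "\<exists>t. p \<le> t \<and> t < q \<and> \<not> w (t+1) < w t" using assms(1,2) unfolding SBp_def
    by (simp add: min_def max_def)
  then obtain t where t: "p \<le> t" "t < q" "\<not> w (t+1) < w t" by blast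
  have "t \<noteq> t + 1" by simp
  hence "w t \<noteq> w (t+1)" using assms(3) by (simp add: inj_eq)
  hence wt: "w t < w (t+1)" using t by simp
  have sub: "{s. 1 \<le> s \<and> s < p \<and> w s < w (s+1)} \<subset> {s. 1 \<le> s \<and> s < q \<and> w s < w (s+1)}"
  proof
    show "{s. 1 \<le> s \<and> s < p \<and> w s < w (s+1)} \<subseteq> {s. 1 \<le> s \<and> s < q \<and> w s < w (s+1)}"
      using assms(1) by auto
    have "t \<in> {s. 1 \<le> s \<and> s < q \<and> w s < w (s+1)}" using t wt assms(4) by simp
    moreover have "t \<notin> {s. 1 \<le> s \<and> s < p \<and> w s < w (s+1)}" using t by simp
    ultimately show "{s. 1 \<le> s \<and> s < p \<and> w s < w (s+1)} \<noteq> {s. 1 \<le> s \<and> s < q \<and> w s < w (s+1)}" by blast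
  qed
  have fin: "finite {s. 1 \<le> s \<and> s < q \<and> w s < w (s+1)}"
    by (rule finite_subset[of _ "{..<q}"]) auto
  show ?thesis unfolding asc_def by (rule psubset_card_mono[OF fin sub])
qed

lemma SBp_sym: "SBp w p q = SBp w q p" unfolding SBp_def by (simp add: min.commute max.commute)

lemma asc_eq_iff: assumes "inj w" "1 \<le> p" "1 \<le> q" shows "asc w p = asc w q \<longleftrightarrow> SBp w p q"
proof
  assume h: "asc w p = asc w q"
  show "SBp w p q"
  proof (rule ccontr)
    assume n: "\<not> SBp w p q"
    hence "p \<noteq> q" by (auto simp: SBp_def)
    show False
    proof (cases "p < q")
      case True thus False using asc_less[OF True n assms(1,2)] h by simp
    next
      case False hence qp: "q < p" using \<open>p \<noteq> q\<close> by simp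
      have n2: "\<not> SBp w q p" using n SBp_sym[of w p q] by blast
      show False using asc_less[OF qp n2 assms(1,3)] h by simp
    qed
  qed
next
  assume h: "SBp w p q"
  hence h2: "SBp w q p" using SBp_sym[of w p q] by blast
  show "asc w p = asc w q"
  proof (cases "p \<le> q")
    case True thus ?thesis using asc_eq[OF True h] by simp
  next
    case False hence "q \<le> p" by simp
    thus ?thesis using asc_eq[OF _ h2] by simp
  qed
qed

definition cG :: "nat \<Rightarrow> (nat\<Rightarrow>nat) \<Rightarrow> real" where
  "cG n w = (\<Sum>i\<in>{1..n}. real (asc w (inv w i))) / real n"

definition G :: "nat \<Rightarrow> (nat\<Rightarrow>nat) \<Rightarrow> nat \<Rightarrow> real" where
  "G n w i = (if i \<in> {1..n} then real (asc w (inv w i)) - cG n w else 0)"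

lemma cone_eq: "x \<in> cone n w \<Longrightarrow> same_block n w i j \<Longrightarrow> x i = x j"
  by (auto simp: cone_def)

lemma cone_le1: "x \<in> cone n w \<Longrightarrow> i < k \<Longrightarrow> k < j \<Longrightarrow> same_block n w i j \<Longrightarrow> \<not> same_block n w i k
   \<Longrightarrow> k \<in> {1..n} \<Longrightarrow> inv w k < inv w i \<Longrightarrow> x k \<le> x i"
  unfolding cone_def by blast

lemma cone_le2: "x \<in> cone n w \<Longrightarrow> i < k \<Longrightarrow> k < j \<Longrightarrow> same_block n w i j \<Longrightarrow> \<not> same_block n w i k
   \<Longrightarrow> k \<in> {1..n} \<Longrightarrow> inv w i < inv w k \<Longrightarrow> x i \<le> x k"
  unfolding cone_def by blast

lemma sb_in: "same_block n w a b \<Longrightarrow> a \<in> {1..n} \<and> b \<in> {1..n}" by (simp add: same_block_def)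

lemma G_cone: assumes "w permutes {1..n}" shows "G n w \<in> cone n w"
proof -
  have inj: "inj w" using permutes_inj[OF assms] .
  have invin: "\<And>i. i \<in> {1..n} \<Longrightarrow> inv w i \<in> {1..n}"
    using permutes_in_image[OF assms] permutes_inverses[OF assms] by metis
  have s1: "(\<Sum>i\<in>{1..n}. G n w i) = 0"
  proof (cases "n = 0")
    case True then show ?thesis by simp
  next
    case False
    have "(\<Sum>i\<in>{1..n}. G n w i) = (\<Sum>i\<in>{1..n}. real (asc w (inv w i)) - cG n w)"
      by (rule sum.cong) (auto simp: G_def)
    also have "\<dots> = 0" using False by (simp add: sum_subtractf cG_def)
    finally show ?thesis .
  qed
  have s2: "G n w i = G n w j" if "same_block n w i j" for i j
  proof -
    from that have h: "i \<in> {1..n}" "j \<in> {1..n}" "SBp w (inv w i) (inv w j)"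
      using sb_inv[OF assms] by auto
    have "asc w (inv w i) = asc w (inv w j)"
      using asc_eq_iff[OF inj, of "inv w i" "inv w j"] h invin by auto
    thus ?thesis using h by (simp add: G_def)
  qed
  have mono: "G n w i \<le> G n w k" if "i \<in> {1..n}" "k \<in> {1..n}" "inv w i < inv w k" for i k
    using that asc_mono[of "inv w i" "inv w k" w] by (simp add: G_def)
  have o: "\<forall>i. i \<notin> {1..n} \<longrightarrow> G n w i = 0" by (simp add: G_def)
  have e: "\<forall>i j. same_block n w i j \<longrightarrow> G n w i = G n w j" using s2 by blast
  have l: "\<forall>i j k. i < k \<and> k < j \<and> same_block n w i j \<and> \<not> same_block n w i k \<and> k \<in> {1..n} \<longrightarrow>
        (inv w k < inv w i \<longrightarrow> G n w k \<le> G n w i) \<and> (inv w i < inv w k \<longrightarrow> G n w i \<le> G n w k)"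
  proof (intro allI impI conjI)
    fix i j k assume h: "i < k \<and> k < j \<and> same_block n w i j \<and> \<not> same_block n w i k \<and> k \<in> {1..n}"
    hence i: "i \<in> {1..n}" using sb_in by blast
    { assume "inv w k < inv w i" thus "G n w k \<le> G n w i" using mono[of k i] h i by blast }
    { assume "inv w i < inv w k" thus "G n w i \<le> G n w k" using mono[of i k] h i by blast }
  qed
  show ?thesis unfolding cone_def using o s1 e l by blast
qed

lemma cone_sb:
  assumes w: "w permutes {1..n}" and u: "u permutes {1..n}" and c: "cone n w \<subseteq> cone n u"
    and h: "same_block n u a b"
  shows "same_block n w a b"
proof -
  have ab: "a \<in> {1..n}" "b \<in> {1..n}" using sb_in[OF h] by auto
  have "G n w a = G n w b" using cone_eq[OF _ h] G_cone[OF w] c by auto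
  hence "asc w (inv w a) = asc w (inv w b)" using ab by (simp add: G_def)
  moreover have "inv w a \<in> {1..n}" "inv w b \<in> {1..n}"
    using ab permutes_in_image[OF w] permutes_inverses[OF w] by metis+
  ultimately have "SBp w (inv w a) (inv w b)" using asc_eq_iff[OF permutes_inj[OF w]] by auto
  thus ?thesis using sb_inv[OF w] ab by auto
qed

lemma perm_in: "w permutes {1..n} \<Longrightarrow> p \<in> {1..n} \<Longrightarrow> w p \<in> {1..n}"
  using permutes_in_image[of w "{1..n}" p] by simp
lemma perm_inv_in: "w permutes {1..n} \<Longrightarrow> p \<in> {1..n} \<Longrightarrow> inv w p \<in> {1..n}"
  using permutes_in_image[of w "{1..n}" "inv w p"] permutes_inverses(1)[of w "{1..n}" p] by simp
lemma perm_invw: "w permutes S \<Longrightarrow> inv w (w p) = p" using permutes_inverses(2) by metis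
lemma perm_winv: "w permutes S \<Longrightarrow> w (inv w p) = p" using permutes_inverses(1) by metis

lemma sb_sym: "same_block n w a b = same_block n w b a"
  unfolding same_block_def by (auto simp: min.commute max.commute)

lemma adj_sb:
  assumes u: "u permutes {1..n}" and t: "1 \<le> t" "t < n" and d: "u (t+1) < u t"
  shows "same_block n u (u t) (u (t+1))"
proof -
  have "SBp u t (t+1)" unfolding SBp_def
  proof (intro allI impI)
    fix s assume "min t (t+1) \<le> s \<and> s < max t (t+1)"
    hence "s = t" by simp
    thus "u (s+1) < u s" using d by simp
  qed
  thus ?thesis using sb_pos[OF u, of t "t+1"] t by simp
qed

lemma SBp_dec: "SBp w p q \<Longrightarrow> p < q \<Longrightarrow> w q < w p"
proof (induction q)
  case 0 then show ?case by simp
next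
  case (Suc q)
  have d: "w (q+1) < w q" using Suc.prems unfolding SBp_def by (auto simp: min_def max_def)
  show ?case
  proof (cases "p = q")
    case True thus ?thesis using d by simp
  next
    case False
    hence pq: "p < q" using Suc.prems by simp
    have "SBp w p q" using Suc.prems pq unfolding SBp_def by (auto simp: min_def max_def)
    hence "w q < w p" using Suc.IH pq by simp
    thus ?thesis using d by simp
  qed
qed

lemma inv_le:
  assumes u: "u permutes {1..n}" and x: "x \<in> cone n u"
  shows "1 \<le> p \<Longrightarrow> p < q \<Longrightarrow> q \<le> n \<Longrightarrow> u q < u p \<Longrightarrow> x (u p) \<le> x (u q)"
proof (induction "q - p" arbitrary: p q rule: less_induct)
  case less
  show ?case
  proof (cases "\<exists>r. p < r \<and> r < q \<and> u q < u r \<and> u r < u p")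
    case True
    then obtain r where r: "p < r" "r < q" "u q < u r" "u r < u p" by blast
    have 1: "x (u p) \<le> x (u r)" using less.hyps[of r p] less.prems r by simp
    have 2: "x (u r) \<le> x (u q)" using less.hyps[of q r] less.prems r by simp
    show ?thesis using 1 2 by simp
  next
    case False
    define R where "R = {t \<in> {p..q}. u p \<le> u t}"
    have fR: "finite R" unfolding R_def by simp
    have pR: "p \<in> R" unfolding R_def using less.prems by simp
    define r where "r = Max R"
    have rR: "r \<in> R" unfolding r_def using fR pR using Max_in[OF fR] pR by blast
    have rge: "\<And>t. t \<in> R \<Longrightarrow> t \<le> r" unfolding r_def using fR by simp
    have qR: "q \<notin> R" unfolding R_def using less.prems by simp
    have r1: "p \<le> r" "r < q" "u p \<le> u r" using rR qR unfolding R_def by (auto simp: le_less)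
    have "r + 1 \<notin> R" using rge[of "r+1"] by auto
    hence f_lt: "u (r+1) < u p" using r1 unfolding R_def by auto
    have inj: "inj u" using permutes_inj[OF u] .
    have f_le: "u (r+1) \<le> u q"
    proof (cases "r + 1 = q")
      case True thus ?thesis by simp
    next
      case False
      hence "p < r + 1" "r + 1 < q" using r1 by auto
      thus ?thesis using False f_lt \<open>\<not> (\<exists>r. _)\<close> by (metis not_le)
    qed
    have nr: "1 \<le> r" "r < n" using r1 less.prems by auto
    have sbef: "same_block n u (u r) (u (r+1))" using adj_sb[OF u nr] f_lt r1 by simp
    have xef: "x (u r) = x (u (r+1))" using cone_eq[OF x sbef] .
    have inr: "\<And>t. 1 \<le> t \<Longrightarrow> t \<le> n \<Longrightarrow> u t \<in> {1..n}" using perm_in[OF u] by simp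
    have iu: "\<And>t. inv u (u t) = t" using perm_invw[OF u] .
    have A: "x (u p) \<le> x (u (r+1))"
    proof (cases "r = p")
      case True thus ?thesis using xef by simp
    next
      case False
      hence "u r \<noteq> u p" using inj by (simp add: inj_eq)
      hence gt: "u p < u r" using r1 by simp
      show ?thesis
      proof (cases "same_block n u (u (r+1)) (u p)")
        case True thus ?thesis using cone_eq[OF x True] by simp
      next
        case nb: False
        have sbfe: "same_block n u (u (r+1)) (u r)" using sbef sb_sym by blast
        have "x (u p) \<le> x (u (r+1))"
          by (rule cone_le1[OF x _ gt sbfe nb]) (use f_lt inr less.prems iu r1 in auto)
        thus ?thesis .
      qed
    qed
    have B: "x (u (r+1)) \<le> x (u q)"
    proof (cases "r + 1 = q")
      case True thus ?thesis by simp
    next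
      case False
      hence "u (r+1) \<noteq> u q" using inj by (simp add: inj_eq)
      hence lt: "u (r+1) < u q" using f_le by simp
      have gt: "u q < u r" using less.prems r1 by simp
      show ?thesis
      proof (cases "same_block n u (u (r+1)) (u q)")
        case True thus ?thesis using cone_eq[OF x True] by simp
      next
        case nb: False
        have sbfe: "same_block n u (u (r+1)) (u r)" using sbef sb_sym by blast
        have "r + 1 < q" using False r1 by simp
        show "x (u (r+1)) \<le> x (u q)"
          by (rule cone_le2[OF x lt gt sbfe nb]) (use inr less.prems iu \<open>r+1<q\<close> in auto)
      qed
    qed
    show ?thesis using A B by simp
  qed
qed

lemma smono_id:
  fixes f :: "nat \<Rightarrow> nat" and n :: nat
  assumes m: "\<And>t. 1 \<le> t \<Longrightarrow> t < n \<Longrightarrow> f t < f (t+1)" and r: "\<And>t. t \<in> {1..n} \<Longrightarrow> f t \<in> {1..n}"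
    and t: "t \<in> {1..n}"
  shows "f t = t"
proof -
  have ge: "1 \<le> s \<longrightarrow> s \<le> n \<longrightarrow> s \<le> f s" for s
  proof (induction s)
    case 0 then show ?case by simp
  next
    case (Suc s)
    show ?case
    proof (cases "s = 0")
      case True thus ?thesis using r[of 1] by auto
    next
      case False thus ?thesis using Suc.IH m[of s] by auto
    qed
  qed
  have le: "k < n \<longrightarrow> f (n - k) \<le> n - k" for k
  proof (induction k)
    case 0 then show ?case using r[of n] by auto
  next
    case (Suc k)
    show ?case
    proof
      assume k: "Suc k < n"
      have e: "n - k = (n - Suc k) + 1" using k by simp
      have "f (n - Suc k) < f (n - Suc k + 1)" using m[of "n - Suc k"] k by simp
      thus "f (n - Suc k) \<le> n - Suc k" using Suc.IH k e by simp
    qed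
  qed
  have "f t \<le> t" using le[of "n - t"] t by simp
  moreover have "t \<le> f t" using ge[of t] t by simp
  ultimately show ?thesis by simp
qed

lemma cone_inj:
  assumes u: "u permutes {1..n}" and z: "z permutes {1..n}"
    and sb: "\<And>a b. same_block n z a b \<Longrightarrow> same_block n u a b" and c: "cone n z \<subseteq> cone n u"
  shows "u = z"
proof -
  have iu: "\<And>t. inv u (u t) = t" using perm_invw[OF u] .
  have ui: "\<And>t. u (inv u t) = t" using perm_winv[OF u] .
  have injz: "inj z" using permutes_inj[OF z] .
  have injiu: "inj (inv u)" using permutes_inj[OF permutes_inv[OF u]] .
  have key: "inv u (z t) < inv u (z (t+1))" if t: "1 \<le> t" "t < n" for t
  proof (rule ccontr)
    assume "\<not> ?thesis"
    moreover have "z t \<noteq> z (t+1)" using injz by (simp add: inj_eq)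
    hence "inv u (z t) \<noteq> inv u (z (t+1))" using injiu by (simp add: inj_eq)
    ultimately have lt: "inv u (z (t+1)) < inv u (z t)" by simp
    have zin: "z t \<in> {1..n}" "z (t+1) \<in> {1..n}" using perm_in[OF z] t by auto
    have pin: "inv u (z t) \<in> {1..n}" "inv u (z (t+1)) \<in> {1..n}" using perm_inv_in[OF u] zin by auto
    show False
    proof (cases "z (t+1) < z t")
      case True
      have "same_block n z (z t) (z (t+1))" using adj_sb[OF z t True] .
      hence "same_block n u (z t) (z (t+1))" using sb by blast
      hence "SBp u (inv u (z t)) (inv u (z (t+1)))" using sb_inv[OF u] by blast
      hence "SBp u (inv u (z (t+1))) (inv u (z t))" using SBp_sym by metis
      hence "u (inv u (z t)) < u (inv u (z (t+1)))" using SBp_dec lt by blast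
      thus False using True ui by simp
    next
      case False
      hence zlt: "z t < z (t+1)" using \<open>z t \<noteq> z (t+1)\<close> by simp
      have gc: "G n z \<in> cone n u" using G_cone[OF z] c by blast
      have "G n z (u (inv u (z (t+1)))) \<le> G n z (u (inv u (z t)))"
        by (rule inv_le[OF u gc]) (use lt pin ui zlt in auto)
      hence A: "G n z (z (t+1)) \<le> G n z (z t)" using ui by simp
      have "\<not> SBp z t (t+1)" using zlt unfolding SBp_def by (auto simp: min_def max_def)
      hence "asc z t < asc z (t+1)" using asc_less[of t "t+1" z] injz t by simp
      thus False using A zin perm_invw[OF z] by (simp add: G_def)
    qed
  qed
  have fid: "inv u (z t) = t" if "t \<in> {1..n}" for t
    by (rule smono_id[of n "\<lambda>t. inv u (z t)"]) (use key perm_inv_in[OF u] perm_in[OF z] that in auto)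
  show ?thesis
  proof
    fix t show "u t = z t"
    proof (cases "t \<in> {1..n}")
      case True thus ?thesis using fid[OF True] ui by metis
    next
      case False thus ?thesis using permutes_not_in[OF u] permutes_not_in[OF z] by metis
    qed
  qed
qed

definition DI :: "(nat\<Rightarrow>nat) \<Rightarrow> nat \<Rightarrow> nat \<Rightarrow> bool" where
  "DI w lo hi \<longleftrightarrow> (\<forall>t. lo \<le> t \<and> t < hi \<longrightarrow> w (t+1) < w t)"

lemma SBp_DI: "SBp w s1 s2 = DI w (min s1 s2) (max s1 s2)" unfolding SBp_def DI_def by simp

locale hop =
  fixes n :: nat and u v :: "nat \<Rightarrow> nat" and a p :: nat
  assumes u: "u permutes {1..n}" and v: "v permutes {1..n}"
    and ap: "1 \<le> a" "a < p" "p \<le> n"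
    and va: "v a = u p" and vmid: "\<And>t. a < t \<Longrightarrow> t \<le> p \<Longrightarrow> v t = u (t - 1)"
    and vout: "\<And>t. t < a \<or> p < t \<Longrightarrow> v t = u t"
    and Alt: "\<And>t. a \<le> t \<Longrightarrow> t < p \<Longrightarrow> u t < u p"
    and left: "1 < a \<Longrightarrow> u p < u (a - 1)" and right: "p < n \<Longrightarrow> u p < u (p+1)"
begin

definition sg :: "nat \<Rightarrow> nat" where "sg s = (if a \<le> s \<and> s < p then s + 1 else s)"

lemma sg_v: "s \<noteq> p \<Longrightarrow> v (sg s) = u s"
  unfolding sg_def using vmid[of "s+1"] vout[of s] by auto

lemma sg_mono: "s1 \<le> s2 \<Longrightarrow> sg s1 \<le> sg s2" unfolding sg_def using ap by auto

lemma DI_fwd: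
  assumes s: "s1 \<le> s2" "1 \<le> s1" "s2 \<le> n" "s1 \<noteq> p" "s2 \<noteq> p" and d: "DI u s1 s2"
  shows "DI v (sg s1) (sg s2)"
proof -
  have np: "\<not> (s1 < p \<and> p < s2)"
  proof
    assume h: "s1 < p \<and> p < s2"
    hence "u (p+1) < u p" using d unfolding DI_def by auto
    thus False using right h s by simp
  qed
  show ?thesis
  proof (cases "p < s1")
    case True
    hence "sg s1 = s1" "sg s2 = s2" using s unfolding sg_def by auto
    thus ?thesis using d True vout unfolding DI_def by auto
  next
    case False
    hence s2p: "s2 < p" using np s by auto
    show ?thesis unfolding DI_def
    proof (intro allI impI)
      fix t assume t: "sg s1 \<le> t \<and> t < sg s2"
      have sg1: "s1 \<le> sg s1" "sg s1 \<le> s1 + 1" unfolding sg_def by auto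
      have sg2: "sg s2 = (if a \<le> s2 then s2 + 1 else s2)" unfolding sg_def using s2p by auto
      show "v (t+1) < v t"
      proof (cases "t + 1 < a")
        case True
        have "s1 \<le> t" "t < s2" using t sg1 sg2 True by (auto split: if_splits)
        hence "u (t+1) < u t" using d unfolding DI_def by auto
        thus ?thesis using vout[of t] vout[of "t+1"] True by simp
      next
        case False
        show ?thesis
        proof (cases "t + 1 = a")
          case True
          have "1 \<le> t" using t sg1 s by simp
          hence "1 < a" using True by simp
          moreover have "a - 1 = t" using True by simp
          ultimately show ?thesis using left va vout[of t] True by simp
        next
          case False
          hence ta: "a \<le> t" using \<open>\<not> t + 1 < a\<close> by simp
          show ?thesis
          proof (cases "t = a")
            case True
            thus ?thesis using va vmid[of "a+1"] ap Alt[of a] by simp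
          next
            case False
            hence ta': "a < t" using ta by simp
            have "a \<le> s2" using t sg2 ta' by (auto split: if_splits)
            hence tl: "t - 1 < s2" using t sg2 ta' by arith
            have "s1 \<le> t - 1" using t sg1 ta' s s2p unfolding sg_def by (auto split: if_splits)
            hence "u (t - 1 + 1) < u (t - 1)" using d tl unfolding DI_def by blast
            moreover have "t < p" using tl s2p by simp
            ultimately show ?thesis using vmid[of t] vmid[of "t+1"] ta' by simp
          qed
        qed
      qed
    qed
  qed
qed

lemma DI_bwd:
  assumes s: "s1 \<le> s2" "1 \<le> s1" "s2 \<le> n" "s1 \<noteq> p" "s2 \<noteq> p" and d: "DI v (sg s1) (sg s2)"
  shows "DI u s1 s2"
proof -
  have np: "\<not> (s1 < p \<and> p < s2)"
  proof
    assume h: "s1 < p \<and> p < s2"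
    have "sg s1 \<le> p" "p < sg s2" using h unfolding sg_def by auto
    hence "v (p+1) < v p" using d unfolding DI_def by auto
    moreover have "v (p+1) = u (p+1)" using vout[of "p+1"] by simp
    moreover have "v p = u (p - 1)" using vmid[of p] ap by simp
    moreover have "u (p - 1) < u p" using Alt[of "p - 1"] ap by simp
    ultimately show False using right h s by simp
  qed
  show ?thesis
  proof (cases "p < s1")
    case True
    hence "sg s1 = s1" "sg s2 = s2" using s unfolding sg_def by auto
    thus ?thesis using d True vout unfolding DI_def by auto
  next
    case False
    hence s2p: "s2 < p" using np s by auto
    show ?thesis unfolding DI_def
    proof (intro allI impI)
      fix t assume t: "s1 \<le> t \<and> t < s2"
      show "u (t+1) < u t"
      proof (cases "t + 1 < a")
        case True
        have "sg s1 = s1" using t True unfolding sg_def by auto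
        moreover have "s2 \<le> sg s2" unfolding sg_def by auto
        ultimately have "v (t+1) < v t" using d t unfolding DI_def by auto
        thus ?thesis using vout[of t] vout[of "t+1"] True by simp
      next
        case False
        show ?thesis
        proof (cases "t + 1 = a")
          case True
          hence "1 < a" using t s by simp
          moreover have "a - 1 = t" using True by simp
          ultimately show ?thesis using left Alt[of a] ap True by simp
        next
          case False
          hence ta: "a \<le> t" using \<open>\<not> t + 1 < a\<close> by simp
          have "sg s1 \<le> t + 1" unfolding sg_def using t by auto
          moreover have "sg s2 = s2 + 1" unfolding sg_def using t ta s2p by auto
          ultimately have "v (t+1+1) < v (t+1)" using d t unfolding DI_def by auto
          moreover have "t + 1 < p" using t s2p by simp
          ultimately show ?thesis using vmid[of "t+1"] vmid[of "t+2"] ta by simp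
        qed
      qed
    qed
  qed
qed

end

lemma sb_refl: "c \<in> {1..n} \<Longrightarrow> same_block n w c c" unfolding same_block_def by auto

lemma SBp_trans: "SBp w p q \<Longrightarrow> SBp w q r \<Longrightarrow> SBp w p r"
  unfolding SBp_def
proof (intro allI impI)
  fix t assume h1: "\<forall>t. min p q \<le> t \<and> t < max p q \<longrightarrow> w (t + 1) < w t"
    and h2: "\<forall>t. min q r \<le> t \<and> t < max q r \<longrightarrow> w (t + 1) < w t"
    and t: "min p r \<le> t \<and> t < max p r"
  have "(min p q \<le> t \<and> t < max p q) \<or> (min q r \<le> t \<and> t < max q r)"
    using t by (cases "p \<le> q"; cases "q \<le> r"; cases "p \<le> r"; simp add: min_def max_def; linarith)
  thus "w (t + 1) < w t" using h1 h2 by blast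
qed

lemma sb_trans: assumes "w permutes {1..n}" "same_block n w a b" "same_block n w b c"
  shows "same_block n w a c"
proof -
  have 1: "a \<in> {1..n} \<and> b \<in> {1..n} \<and> SBp w (inv w a) (inv w b)" using assms(2) sb_inv[OF assms(1)] by blast
  have 2: "b \<in> {1..n} \<and> c \<in> {1..n} \<and> SBp w (inv w b) (inv w c)" using assms(3) sb_inv[OF assms(1)] by blast
  have "SBp w (inv w a) (inv w c)" using SBp_trans 1 2 by blast
  thus ?thesis using 1 2 sb_inv[OF assms(1)] by blast
qed

lemma SBp_sub: "SBp w s1 s2 \<Longrightarrow> s1 \<le> r \<Longrightarrow> r \<le> s2 \<Longrightarrow> SBp w r s2"
  unfolding SBp_def by (auto simp: min_def max_def)

context hop begin

lemma sg_in: "s \<in> {1..n} \<Longrightarrow> sg s \<in> {1..n}" unfolding sg_def using ap by auto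

lemma inv_v_u: "s \<in> {1..n} \<Longrightarrow> s \<noteq> p \<Longrightarrow> inv v (u s) = sg s"
  using sg_v[of s] perm_invw[OF v, of "sg s"] by metis

lemma inv_v_x: "inv v (u p) = a" using va perm_invw[OF v, of a] by metis

lemma sg_strict: "s1 < s2 \<Longrightarrow> s1 \<noteq> p \<Longrightarrow> s2 \<noteq> p \<Longrightarrow> sg s1 < sg s2"
  unfolding sg_def by auto

lemma sg_minmax: "min (sg s1) (sg s2) = sg (min s1 s2)" "max (sg s1) (sg s2) = sg (max s1 s2)"
  using sg_mono[of s1 s2] sg_mono[of s2 s1] by (cases "s1 \<le> s2"; simp add: min_def max_def)+

lemma G1:
  assumes c: "c \<in> {1..n}" "c \<noteq> u p" and d: "d \<in> {1..n}" "d \<noteq> u p"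
  shows "same_block n v c d \<longleftrightarrow> same_block n u c d"
proof -
  define s1 where "s1 = inv u c"
  define s2 where "s2 = inv u d"
  have s: "s1 \<in> {1..n}" "s2 \<in> {1..n}" using perm_inv_in[OF u] c d s1_def s2_def by auto
  have us: "u s1 = c" "u s2 = d" using perm_winv[OF u] s1_def s2_def by auto
  have sp: "s1 \<noteq> p" "s2 \<noteq> p" using us c d by auto
  have iv: "inv v c = sg s1" "inv v d = sg s2" using inv_v_u s sp us by metis+
  have "same_block n v c d \<longleftrightarrow> SBp v (sg s1) (sg s2)" using sb_inv[OF v] c d iv by simp
  also have "\<dots> \<longleftrightarrow> DI v (sg (min s1 s2)) (sg (max s1 s2))" by (simp add: SBp_DI sg_minmax)
  also have "\<dots> \<longleftrightarrow> DI u (min s1 s2) (max s1 s2)"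
  proof -
    have m: "min s1 s2 \<le> max s1 s2" "1 \<le> min s1 s2" "max s1 s2 \<le> n" "min s1 s2 \<noteq> p" "max s1 s2 \<noteq> p"
      using s sp by (auto simp: min_def max_def)
    show ?thesis using DI_bwd[OF m] DI_fwd[OF m] by blast
  qed
  also have "\<dots> \<longleftrightarrow> same_block n u c d" using sb_inv[OF u] c d s1_def s2_def by (simp add: SBp_DI)
  finally show ?thesis .
qed

lemma xin: "u p \<in> {1..n}" using perm_in[OF u] ap by simp

lemma xsing: assumes "same_block n u (u p) d" shows "d = u p"
proof (rule ccontr)
  assume ne: "d \<noteq> u p"
  have d: "d \<in> {1..n}" using sb_in[OF assms] by simp
  define s where "s = inv u d"
  have s: "s \<in> {1..n}" "u s = d" using perm_inv_in[OF u] perm_winv[OF u] d s_def by auto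
  have sb: "SBp u p s" using sb_inv[OF u] assms perm_invw[OF u] s_def by metis
  have "s \<noteq> p" using s ne by auto
  show False
  proof (cases "s < p")
    case True
    have "\<forall>t. s \<le> t \<and> t < p \<longrightarrow> u (t+1) < u t" using sb True unfolding SBp_def by (simp add: min_def max_def)
    moreover have "s \<le> p - 1 \<and> p - 1 < p" using True ap by simp
    ultimately have "u (p - 1 + 1) < u (p - 1)" by blast
    moreover have "a \<le> p - 1" using ap by simp
    ultimately show False using Alt[of "p - 1"] ap by simp
  next
    case False
    hence "u (p + 1) < u p" using sb \<open>s \<noteq> p\<close> unfolding SBp_def by (auto simp: min_def max_def)
    moreover have "p < n" using False \<open>s \<noteq> p\<close> s by simp
    ultimately show False using right by simp
  qed
qed

lemma F3: "same_block n v (u p) (u a)"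
proof -
  have "v (a+1) = u a" using vmid[of "a+1"] ap by simp
  moreover have "u a < u p" using Alt[of a] ap by simp
  ultimately have "same_block n v (v a) (v (a+1))" using adj_sb[OF v, of a] ap va by simp
  thus ?thesis using va \<open>v (a+1) = u a\<close> by simp
qed

lemma ya: "u a \<in> {1..n}" "u a \<noteq> u p"
  using perm_in[OF u, of a] ap permutes_inj[OF u] by (auto simp: inj_eq)

lemma F1: assumes "same_block n u c d" shows "same_block n v c d"
proof (cases "c = u p")
  case True
  hence "d = u p" using xsing assms by simp
  thus ?thesis using True sb_refl xin by simp
next
  case False
  have "d \<noteq> u p" using xsing assms sb_sym False by metis
  thus ?thesis using G1 False assms sb_in[OF assms] by simp
qed

lemma F2: assumes "same_block n v c d"
  shows "same_block n u c d \<or> ((c = u p \<or> same_block n u c (u a)) \<and> (d = u p \<or> same_block n u d (u a)))"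
proof -
  have cd: "c \<in> {1..n}" "d \<in> {1..n}" using sb_in[OF assms] by auto
  have yx: "same_block n v (u a) (u p)" using F3 sb_sym by metis
  show ?thesis
  proof (cases "c = u p")
    case c: True
    show ?thesis
    proof (cases "d = u p")
      case True thus ?thesis using c by simp
    next
      case False
      have "same_block n v d (u a)" using sb_trans[OF v] assms F3 c sb_sym by metis
      hence "same_block n u d (u a)" using G1 False cd ya by simp
      thus ?thesis using c by simp
    qed
  next
    case c: False
    show ?thesis
    proof (cases "d = u p")
      case True
      have "same_block n v c (u a)" using sb_trans[OF v] assms F3 True by metis
      hence "same_block n u c (u a)" using G1 c cd ya by simp
      thus ?thesis using True by simp
    next
      case False thus ?thesis using G1 c cd assms by simp
    qed
  qed
qed

end

context hop begin

lemma cone_sub: "cone n v \<subseteq> cone n u"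
proof
  fix X assume X: "X \<in> cone n v"
  have o: "\<forall>i. i \<notin> {1..n} \<longrightarrow> X i = 0" and s: "(\<Sum>i\<in>{1..n}. X i) = 0"
    using X unfolding cone_def by auto
  have e: "\<forall>i j. same_block n u i j \<longrightarrow> X i = X j" using F1 cone_eq[OF X] by blast
  have iu: "\<And>t. inv u (u t) = t" using perm_invw[OF u] .
  have ui: "\<And>t. u (inv u t) = t" using perm_winv[OF u] .
  have Xx: "X (u p) = X (u a)" using cone_eq[OF X F3] .
  have l: "\<forall>i j k. i < k \<and> k < j \<and> same_block n u i j \<and> \<not> same_block n u i k \<and> k \<in> {1..n} \<longrightarrow>
        (inv u k < inv u i \<longrightarrow> X k \<le> X i) \<and> (inv u i < inv u k \<longrightarrow> X i \<le> X k)"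
  proof (intro allI impI conjI)
    fix i j k assume h: "i < k \<and> k < j \<and> same_block n u i j \<and> \<not> same_block n u i k \<and> k \<in> {1..n}"
    have ij: "i \<in> {1..n}" "j \<in> {1..n}" using sb_in h by auto
    have ix: "i \<noteq> u p" using xsing h by fastforce
    have jx: "j \<noteq> u p" using xsing h sb_sym by fastforce
    define si where "si = inv u i"
    define sj where "sj = inv u j"
    define sk where "sk = inv u k"
    have sin: "si \<in> {1..n}" "sj \<in> {1..n}" "sk \<in> {1..n}"
      using perm_inv_in[OF u] ij h si_def sj_def sk_def by auto
    have us: "u si = i" "u sj = j" "u sk = k" using ui si_def sj_def sk_def by auto
    have sip: "si \<noteq> p" "sj \<noteq> p" using us ix jx by auto
    have ivs: "inv v i = sg si" "inv v j = sg sj" using inv_v_u sin sip us by metis+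
    have vs: "v (sg si) = i" "v (sg sj) = j" using sg_v sip us by auto
    have sgin: "sg si \<in> {1..n}" "sg sj \<in> {1..n}" using sg_in sin by auto
    {
      assume a1: "inv u k < inv u i"
      show "X k \<le> X i"
      proof (cases "k = u p")
        case True
        hence skp: "sk = p" using sk_def iu by simp
        hence psi: "p < si" using a1 sk_def si_def by simp
        hence "sg si = si" unfolding sg_def by simp
        have "X (v a) \<le> X (v si)"
          by (rule inv_le[OF v X]) (use psi ap sin vout[of si] va us True h in auto)
        thus ?thesis using va vout[of si] psi us True by simp
      next
        case False
        hence skp: "sk \<noteq> p" using us by auto
        have "sg sk < sg si" using sg_strict[OF _ skp sip(1)] a1 sk_def si_def by simp
        moreover have "v (sg sk) = k" using sg_v skp us by simp
        moreover have "sg sk \<in> {1..n}" using sg_in sin by simp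
        ultimately have "X (v (sg sk)) \<le> X (v (sg si))"
          using inv_le[OF v X, of "sg sk" "sg si"] sgin vs h by simp
        thus ?thesis using vs \<open>v (sg sk) = k\<close> by simp
      qed
    }
    {
      assume a2: "inv u i < inv u k"
      have Xij: "X i = X j" using e h by blast
      have sbp: "SBp u si sj" using sb_inv[OF u] h si_def sj_def by blast
      have "si \<noteq> sj" using us h by auto
      have sjsi: "sj < si"
      proof (rule ccontr)
        assume "\<not> sj < si" hence "si < sj" using \<open>si \<noteq> sj\<close> by simp
        hence "u sj < u si" using SBp_dec sbp by blast
        thus False using us h by simp
      qed
      show "X i \<le> X k"
      proof (cases "k = u p")
        case False
        hence skp: "sk \<noteq> p" using us by auto
        have "sj < sk" using sjsi a2 si_def sk_def by simp
        hence "sg sj < sg sk" using sg_strict skp sip by simp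
        moreover have "v (sg sk) = k" using sg_v skp us by simp
        moreover have "sg sk \<in> {1..n}" using sg_in sin by simp
        ultimately have "X (v (sg sj)) \<le> X (v (sg sk))"
          using inv_le[OF v X, of "sg sj" "sg sk"] sgin vs h by simp
        thus ?thesis using vs \<open>v (sg sk) = k\<close> Xij by simp
      next
        case True
        hence skp: "sk = p" using sk_def iu by simp
        hence sip2: "si < p" using a2 sk_def si_def by simp
        have sja: "sj < a"
        proof (rule ccontr)
          assume "\<not> sj < a"
          hence "u sj < u p" using Alt[of sj] sjsi sip2 by simp
          thus False using us True h by simp
        qed
        show ?thesis
        proof (cases "si < a")
          case True
          have "X (v sj) \<le> X (v a)"
            by (rule inv_le[OF v X]) (use sja sin vout[of sj] va us \<open>k = u p\<close> h ap in auto)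
          thus ?thesis using vout[of sj] va sja us \<open>k = u p\<close> Xij by simp
        next
          case False
          have "SBp u a si" using SBp_sub[of u sj si a] sbp SBp_sym[of u si sj] sja sjsi False by simp
          hence "same_block n u (u a) (u si)" using sb_pos[OF u, of a si] ap sin by simp
          hence "same_block n v (u a) i" using F1 us by simp
          hence "X (u a) = X i" using cone_eq[OF X] by blast
          thus ?thesis using Xx \<open>k = u p\<close> by simp
        qed
      qed
    }
  qed
  show "X \<in> cone n u" unfolding cone_def using o s e l by blast
qed

lemma cover: "covers (Sn n) (shard_le n) u v"
proof -
  have uS: "u \<in> Sn n" "v \<in> Sn n" using u v by (auto simp: Sn_def)
  have le: "shard_le n u v" using cone_sub by (simp add: shard_le_def)
  have ne: "u \<noteq> v"
  proof
    assume "u = v" hence "u a = u p" using va by simp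
    thus False using ya by simp
  qed
  have nz: "\<not> (\<exists>z\<in>Sn n. shard_le n u z \<and> shard_le n z v \<and> z \<noteq> u \<and> z \<noteq> v)"
  proof
    assume "\<exists>z\<in>Sn n. shard_le n u z \<and> shard_le n z v \<and> z \<noteq> u \<and> z \<noteq> v"
    then obtain z where zS: "z \<in> Sn n" and c1: "cone n z \<subseteq> cone n u" and c2: "cone n v \<subseteq> cone n z"
      and zu: "z \<noteq> u" and zv: "z \<noteq> v" by (auto simp: shard_le_def)
    have z: "z permutes {1..n}" using zS by (simp add: Sn_def)
    have uz: "\<And>c d. same_block n u c d \<Longrightarrow> same_block n z c d" using cone_sb[OF z u c1] .
    have zvs: "\<And>c d. same_block n z c d \<Longrightarrow> same_block n v c d" using cone_sb[OF v z c2] .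
    show False
    proof (cases "same_block n z (u p) (u a)")
      case True
      have "same_block n z c d" if h: "same_block n v c d" for c d
      proof -
        from F2[OF h] show ?thesis
        proof
          assume "same_block n u c d" thus ?thesis using uz by blast
        next
          assume h2: "(c = u p \<or> same_block n u c (u a)) \<and> (d = u p \<or> same_block n u d (u a))"
          have cc: "same_block n z c (u a)" using h2 True uz by blast
          have dd: "same_block n z d (u a)" using h2 True uz by blast
          show ?thesis using sb_trans[OF z cc] dd sb_sym by metis
        qed
      qed
      hence "z = v" using cone_inj[OF z v _ c2] by blast
      thus False using zv by simp
    next
      case False
      have "same_block n u c d" if h: "same_block n z c d" for c d
      proof -
        from F2[OF zvs[OF h]] show ?thesis
        proof
          assume h2: "(c = u p \<or> same_block n u c (u a)) \<and> (d = u p \<or> same_block n u d (u a))"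
          show ?thesis
          proof (cases "c = u p")
            case cx: True
            show ?thesis
            proof (cases "d = u p")
              case True thus ?thesis using cx sb_refl xin by simp
            next
              case dx: False
              hence "same_block n z d (u a)" using h2 uz by blast
              hence "same_block n z (u p) (u a)" using sb_trans[OF z] h cx by metis
              thus ?thesis using False by simp
            qed
          next
            case cx: False
            hence cy: "same_block n u c (u a)" using h2 by blast
            show ?thesis
            proof (cases "d = u p")
              case True
              have "same_block n z c (u a)" using cy uz by blast
              hence "same_block n z (u p) (u a)" using sb_trans[OF z] h True sb_sym by metis
              thus ?thesis using False by simp
            next
              case dx: False
              hence "same_block n u d (u a)" using h2 by blast
              thus ?thesis using sb_trans[OF u cy] sb_sym by metis
            qed
          qed
        qed
      qed
      hence "u = z" using cone_inj[OF u z _ c1] by blast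
      thus False using zu by simp
    qed
  qed
  show ?thesis unfolding covers_def using uS le ne nz by blast
qed

end

definition F :: "nat list \<Rightarrow> nat \<Rightarrow> nat" where
  "F xs i = (if 1 \<le> i \<and> i \<le> length xs then xs ! (i - 1) else i)"

lemma len_n: "distinct xs \<Longrightarrow> set xs = {1..n} \<Longrightarrow> length xs = n"
  using distinct_card[of xs] by simp

lemma F_perm: assumes d: "distinct xs" and s: "set xs = {1..n}" shows "F xs permutes {1..n}"
proof (rule inj_imp_permutes)
  have l: "length xs = n" using len_n[OF d s] .
  show "inj_on (F xs) {1..n}"
  proof (rule inj_onI)
    fix i j assume i: "i \<in> {1..n}" and j: "j \<in> {1..n}" and e: "F xs i = F xs j"
    hence "xs ! (i - 1) = xs ! (j - 1)" using l by (simp add: F_def)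
    moreover have "i - 1 < length xs" "j - 1 < length xs" using i j l by auto
    ultimately have "i - 1 = j - 1" using nth_eq_iff_index_eq[OF d] by blast
    moreover have "1 \<le> i" "1 \<le> j" using i j by auto
    ultimately show "i = j" by arith
  qed
  show "finite {1..n}" by simp
  show "F xs x \<in> {1..n}" if "x \<in> {1..n}" for x
  proof -
    have "1 \<le> x" "x \<le> n" using that by auto
    hence "x - 1 < length xs" using l by arith
    hence "xs ! (x - 1) \<in> set xs" by (rule nth_mem)
    thus ?thesis using that l s by (simp add: F_def)
  qed
  show "F xs i = i" if "i \<notin> {1..n}" for i
  proof -
    have "\<not> (1 \<le> i \<and> i \<le> length xs)" using that l by auto
    thus ?thesis unfolding F_def by (rule if_not_P)
  qed
qed

lemma map_perm: assumes w: "w permutes {1..n}"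
  shows "distinct (map w [1..<n+1])" "set (map w [1..<n+1]) = {1..n}" "F (map w [1..<n+1]) = w"
proof -
  show "distinct (map w [1..<n+1])" using permutes_inj_on[OF w] by (simp add: distinct_map)
  have "set [1..<n+1] = {1..n}" by auto
  thus "set (map w [1..<n+1]) = {1..n}" using permutes_image[OF w] by simp
  show "F (map w [1..<n+1]) = w"
  proof
    fix i show "F (map w [1..<n+1]) i = w i"
    proof (cases "1 \<le> i \<and> i \<le> n")
      case True
      have "length [1..<n+1] = n" by simp
      hence ln: "i - 1 < length [1..<n+1]" using True by arith
      have "map w [1..<n+1] ! (i - 1) = w ([1..<n+1] ! (i - 1))" using nth_map[OF ln, of w] .
      also have "[1..<n+1] ! (i - 1) = i" using True by (simp del: upt_Suc)
      finally show ?thesis using True by (simp add: F_def del: upt_Suc)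
    next
      case False thus ?thesis using permutes_not_in[OF w, of i] by (auto simp: F_def)
    qed
  qed
qed

lemma F_inj: assumes "length xs = length ys" "F xs = F ys" shows "xs = ys"
proof (rule nth_equalityI)
  show "length xs = length ys" by fact
  fix i assume "i < length xs"
  thus "xs ! i = ys ! i" using fun_cong[OF assms(2), of "i+1"] assms(1) by (simp add: F_def)
qed

fun ldes :: "nat list \<Rightarrow> nat" where
  "ldes [] = 0"
| "ldes [x] = 0"
| "ldes (x # y # zs) = (if y < x then 1 else 0) + ldes (y # zs)"

lemma ldes_card: "ldes xs = card {i. 1 \<le> i \<and> i < length xs \<and> xs ! i < xs ! (i - 1)}"
proof (induction xs rule: ldes.induct)
  case 1 then show ?case by simp
next
  case (2 x) then show ?case by simp
next
  case (3 x y zs)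
  let ?T = "{i. 1 \<le> i \<and> i < length (y # zs) \<and> (y # zs) ! i < (y # zs) ! (i - 1)}"
  have eq: "{i. 1 \<le> i \<and> i < length (x # y # zs) \<and> (x # y # zs) ! i < (x # y # zs) ! (i - 1)}
      = (if y < x then {1} else {}) \<union> Suc ` ?T"
  proof (rule set_eqI)
    fix i
    show "i \<in> {i. 1 \<le> i \<and> i < length (x # y # zs) \<and> (x # y # zs) ! i < (x # y # zs) ! (i - 1)}
      \<longleftrightarrow> i \<in> (if y < x then {1} else {}) \<union> Suc ` ?T"
    proof (cases i)
      case 0 then show ?thesis by auto
    next
      case (Suc j)
      show ?thesis
      proof (cases j)
        case 0 then show ?thesis using Suc by auto
      next
        case (Suc k)
        have "i \<in> Suc ` ?T \<longleftrightarrow> j \<in> ?T" using \<open>i = Suc j\<close> by auto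
        thus ?thesis using \<open>i = Suc j\<close> Suc by auto
      qed
    qed
  qed
  have fin: "finite ?T" by (rule finite_subset[of _ "{..<length (y#zs)}"]) auto
  have "1 \<notin> Suc ` ?T" by auto
  hence "card ((if y < x then {1} else {}) \<union> Suc ` ?T) = (if y < x then 1 else 0) + card ?T"
    using fin by (simp add: card_image)
  thus ?case using eq "3.IH" by simp
qed

lemma des_F: assumes "length xs = n" shows "des n (F xs) = ldes xs"
proof -
  have "descents n (F xs) = {i. 1 \<le> i \<and> i < length xs \<and> xs ! i < xs ! (i - 1)}"
    using assms by (auto simp: descents_def F_def)
  thus ?thesis by (simp add: des_def ldes_card)
qed

lemma ldes_append: "ldes (xs @ ys) = ldes xs + ldes ys + (if xs \<noteq> [] \<and> ys \<noteq> [] \<and> hd ys < last xs then 1 else 0)"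
proof (induction xs rule: ldes.induct)
  case 1 then show ?case by simp
next
  case (2 x) then show ?case by (cases ys) auto
next
  case (3 x y zs) then show ?case by simp
qed

definition av :: "nat list \<Rightarrow> bool" where
  "av xs \<longleftrightarrow> \<not> (\<exists>i j k. i < j \<and> j < k \<and> k < length xs \<and> xs ! k < xs ! i \<and> xs ! i < xs ! j)"

lemma av_F: assumes "length xs = n" shows "avoids231 n (F xs) \<longleftrightarrow> av xs"
proof
  assume a: "avoids231 n (F xs)"
  show "av xs" unfolding av_def
  proof
    assume "\<exists>i j k. i < j \<and> j < k \<and> k < length xs \<and> xs ! k < xs ! i \<and> xs ! i < xs ! j"
    then obtain i j k where h: "i < j \<and> j < k \<and> k < length xs \<and> xs ! k < xs ! i \<and> xs ! i < xs ! j" by blast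
    have "1 \<le> i+1 \<and> i+1 < j+1 \<and> j+1 < k+1 \<and> k+1 \<le> n \<and> F xs (k+1) < F xs (i+1) \<and> F xs (i+1) < F xs (j+1)"
      using h assms by (simp add: F_def)
    thus False using a unfolding avoids231_def by blast
  qed
next
  assume a: "av xs"
  show "avoids231 n (F xs)" unfolding avoids231_def
  proof
    assume "\<exists>i j k. 1 \<le> i \<and> i < j \<and> j < k \<and> k \<le> n \<and> F xs k < F xs i \<and> F xs i < F xs j"
    then obtain i j k where h: "1 \<le> i \<and> i < j \<and> j < k \<and> k \<le> n \<and> F xs k < F xs i \<and> F xs i < F xs j" by blast
    have "F xs i = xs ! (i - 1)" "F xs j = xs ! (j - 1)" "F xs k = xs ! (k - 1)" using h assms by (auto simp: F_def)
    hence "i - 1 < j - 1 \<and> j - 1 < k - 1 \<and> k - 1 < length xs \<and> xs ! (k-1) < xs ! (i-1) \<and> xs ! (i-1) < xs ! (j-1)"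
      using h assms by auto
    thus False using a unfolding av_def by blast
  qed
qed

lemma av_split:
  assumes d: "distinct (L @ m # R)" and lt1: "\<forall>y\<in>set L. y < m" and lt2: "\<forall>y\<in>set R. y < m"
  shows "av (L @ m # R) \<longleftrightarrow> av L \<and> av R \<and> (\<forall>a\<in>set L. \<forall>b\<in>set R. a < b)"
proof -
  let ?xs = "L @ m # R" and ?l = "length L"
  have n1: "\<And>i. i < ?l \<Longrightarrow> ?xs ! i = L ! i" by (simp add: nth_append)
  have n2: "?xs ! ?l = m" by simp
  have n3: "\<And>i. ?l < i \<Longrightarrow> ?xs ! i = R ! (i - ?l - 1)"
    by (simp add: nth_append)
  have len: "length ?xs = ?l + 1 + length R" by simp
  show ?thesis
  proof
    assume a: "av ?xs"
    have 1: "av L" unfolding av_def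
    proof
      assume "\<exists>i j k. i < j \<and> j < k \<and> k < length L \<and> L ! k < L ! i \<and> L ! i < L ! j"
      then obtain i j k where h: "i < j \<and> j < k \<and> k < length L \<and> L ! k < L ! i \<and> L ! i < L ! j" by blast
      hence "i < j \<and> j < k \<and> k < length ?xs \<and> ?xs ! k < ?xs ! i \<and> ?xs ! i < ?xs ! j"
        using n1 len by simp
      thus False using a unfolding av_def by blast
    qed
    have 2: "av R" unfolding av_def
    proof
      assume "\<exists>i j k. i < j \<and> j < k \<and> k < length R \<and> R ! k < R ! i \<and> R ! i < R ! j"
      then obtain i j k where h: "i < j \<and> j < k \<and> k < length R \<and> R ! k < R ! i \<and> R ! i < R ! j" by blast
      have e: "?xs ! (i + ?l + 1) = R ! i" "?xs ! (j + ?l + 1) = R ! j" "?xs ! (k + ?l + 1) = R ! k"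
        using n3[of "i + ?l + 1"] n3[of "j + ?l + 1"] n3[of "k + ?l + 1"] by simp_all
      hence "i + ?l + 1 < j + ?l + 1 \<and> j + ?l + 1 < k + ?l + 1 \<and> k + ?l + 1 < length ?xs
          \<and> ?xs ! (k + ?l + 1) < ?xs ! (i + ?l + 1) \<and> ?xs ! (i + ?l + 1) < ?xs ! (j + ?l + 1)"
        using h len by simp
      thus False using a unfolding av_def by blast
    qed
    have 3: "\<forall>a\<in>set L. \<forall>b\<in>set R. a < b"
    proof (intro ballI)
      fix a b assume ab: "a \<in> set L" "b \<in> set R"
      show "a < b"
      proof (rule ccontr)
        assume "\<not> a < b"
        moreover have "a \<noteq> b" using d ab by auto
        ultimately have ba: "b < a" by simp
        obtain i where i: "i < length L" "L ! i = a" using ab(1) by (auto simp: in_set_conv_nth)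
        obtain k where k: "k < length R" "R ! k = b" using ab(2) by (auto simp: in_set_conv_nth)
        have "?xs ! (k + ?l + 1) = b" using n3[of "k + ?l + 1"] k by simp
        hence "i < ?l \<and> ?l < k + ?l + 1 \<and> k + ?l + 1 < length ?xs \<and> ?xs ! (k + ?l + 1) < ?xs ! i \<and> ?xs ! i < ?xs ! ?l"
          using i k n1 n2 len ba lt1 ab by simp
        thus False using a unfolding av_def by blast
      qed
    qed
    show "av L \<and> av R \<and> (\<forall>a\<in>set L. \<forall>b\<in>set R. a < b)" using 1 2 3 by blast
  next
    assume a: "av L \<and> av R \<and> (\<forall>a\<in>set L. \<forall>b\<in>set R. a < b)"
    show "av ?xs" unfolding av_def
    proof
      assume "\<exists>i j k. i < j \<and> j < k \<and> k < length ?xs \<and> ?xs ! k < ?xs ! i \<and> ?xs ! i < ?xs ! j"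
      then obtain i j k where h: "i < j" "j < k" "k < length ?xs" "?xs ! k < ?xs ! i" "?xs ! i < ?xs ! j" by blast
      have inL: "\<And>t. t < ?l \<Longrightarrow> ?xs ! t \<in> set L" using n1 by simp
      have inR: "\<And>t. ?l < t \<Longrightarrow> t < length ?xs \<Longrightarrow> ?xs ! t \<in> set R"
        using n3 len by (metis add_diff_cancel_left' diff_diff_left less_diff_conv2 nth_mem add.commute le_add2
            less_imp_le_nat add_less_cancel_left Suc_eq_plus1 less_Suc_eq_le diff_less_mono)
      show False
      proof (cases "k < ?l")
        case True
        hence "i < j \<and> j < k \<and> k < length L \<and> L ! k < L ! i \<and> L ! i < L ! j" using h n1 by simp
        thus False using a unfolding av_def by blast
      next
        case kl: False
        show False
        proof (cases "k = ?l")
          case True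
          hence "?xs ! i < m" using inL h lt1 by simp
          thus False using h True n2 by simp
        next
          case False
          hence kl2: "?l < k" using kl by simp
          show False
          proof (cases "?l < i")
            case True
            have e: "?xs ! i = R ! (i - ?l - 1)" "?xs ! j = R ! (j - ?l - 1)" "?xs ! k = R ! (k - ?l - 1)"
              using n3 True h by auto
            have "i - ?l - 1 < j - ?l - 1 \<and> j - ?l - 1 < k - ?l - 1 \<and> k - ?l - 1 < length R
               \<and> R ! (k - ?l - 1) < R ! (i - ?l - 1) \<and> R ! (i - ?l - 1) < R ! (j - ?l - 1)"
              using h True e len by auto
            thus False using a unfolding av_def by blast
          next
            case False
            show False
            proof (cases "i = ?l")
              case True
              have "?xs ! j \<in> set R" using inR h True by simp
              thus False using h True n2 lt2 by fastforce
            next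
              case False
              hence "i < ?l" using \<open>\<not> ?l < i\<close> by simp
              hence "?xs ! i \<in> set L" using inL by simp
              moreover have "?xs ! k \<in> set R" using inR kl2 h by simp
              ultimately show False using a h by fastforce
            qed
          qed
        qed
      qed
    qed
  qed
qed

datatype tr = Lf | Nd tr nat tr

primrec io :: "tr \<Rightarrow> nat list" where
  "io Lf = []"
| "io (Nd l x r) = io l @ x # io r"

primrec wft :: "tr \<Rightarrow> bool" where
  "wft Lf = True"
| "wft (Nd l x r) = (wft l \<and> wft r \<and> (\<forall>y\<in>set (io l). y < x) \<and> (\<forall>y\<in>set (io r). y < x)
      \<and> set (io l) \<inter> set (io r) = {})"

lemma io_Lf: "io t = [] \<longleftrightarrow> t = Lf" by (cases t) auto

lemma wft_distinct: "wft t \<Longrightarrow> distinct (io t)"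
  by (induction t) auto

lemma ex_tree: "distinct xs \<Longrightarrow> \<exists>t. wft t \<and> io t = xs"
proof (induction "length xs" arbitrary: xs rule: less_induct)
  case less
  show ?case
  proof (cases "xs = []")
    case True thus ?thesis by (intro exI[of _ Lf]) simp
  next
    case False
    define m where "m = Max (set xs)"
    have mx: "m \<in> set xs" using False m_def by simp
    then obtain L R where xs: "xs = L @ m # R" using split_list by metis
    have dL: "distinct L" "distinct R" using less.prems xs by auto
    obtain tl where tl: "wft tl" "io tl = L" using less.hyps[of L] dL xs by auto
    obtain tr where tr: "wft tr" "io tr = R" using less.hyps[of R] dL xs by auto
    have "\<forall>y\<in>set L. y < m"
    proof
      fix y assume y: "y \<in> set L"
      have "y \<in> set xs" using y xs by simp
      hence "y \<le> m" unfolding m_def by (rule Max_ge[rotated]) simp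
      moreover have "y \<noteq> m" using y xs less.prems by auto
      ultimately show "y < m" by simp
    qed
    moreover have "\<forall>y\<in>set R. y < m"
    proof
      fix y assume y: "y \<in> set R"
      have "y \<in> set xs" using y xs by simp
      hence "y \<le> m" unfolding m_def by (rule Max_ge[rotated]) simp
      moreover have "y \<noteq> m" using y xs less.prems by auto
      ultimately show "y < m" by simp
    qed
    moreover have "set L \<inter> set R = {}" using less.prems xs by auto
    ultimately have "wft (Nd tl m tr) \<and> io (Nd tl m tr) = xs" using tl tr xs by simp
    thus ?thesis by blast
  qed
qed

lemma io_inj: "wft t1 \<Longrightarrow> wft t2 \<Longrightarrow> io t1 = io t2 \<Longrightarrow> t1 = t2"
proof (induction t1 arbitrary: t2)
  case Lf thus ?case using io_Lf by metis
next
  case (Nd l x r)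
  show ?case
  proof (cases t2)
    case Lf thus ?thesis using Nd.prems by simp
  next
    case (Nd l2 x2 r2)
    have e: "io l @ x # io r = io l2 @ x2 # io r2" using Nd.prems \<open>t2 = _\<close> by simp
    have mx1: "Max (set (io (Nd l x r))) = x" using Nd.prems(1)
      by (intro Max_eqI) (auto simp: less_imp_le)
    have mx2: "Max (set (io (Nd l2 x2 r2))) = x2" using Nd.prems(2) \<open>t2 = _\<close>
      by (intro Max_eqI) (auto simp: less_imp_le)
    have xx: "x = x2" using mx1 mx2 Nd.prems(3) \<open>t2 = _\<close> by metis
    have nl: "x \<notin> set (io l)" "x \<notin> set (io l2)" using Nd.prems \<open>t2 = _\<close> xx by auto
    have "takeWhile (\<lambda>y. y \<noteq> x) (io l @ x # io r) = io l"
      by (subst takeWhile_append2) (use nl in auto)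
    moreover have "takeWhile (\<lambda>y. y \<noteq> x) (io l2 @ x # io r2) = io l2"
      by (subst takeWhile_append2) (use nl in auto)
    ultimately have ll: "io l = io l2" using e xx by simp
    hence rr: "io r = io r2" using e xx by simp
    have "l = l2" using Nd.IH(1)[of l2] ll Nd.prems \<open>t2 = _\<close> by simp
    moreover have "r = r2" using Nd.IH(2)[of r2] rr Nd.prems \<open>t2 = _\<close> by simp
    ultimately show ?thesis using xx \<open>t2 = _\<close> by simp
  qed
qed

primrec nrm :: "tr \<Rightarrow> tr" where
  "nrm Lf = Lf"
| "nrm (Nd l x r) = (if l = Lf then Nd (nrm r) x Lf else if r = Lf then Nd (nrm l) x Lf else Nd (nrm l) x (nrm r))"

primrec isn :: "tr \<Rightarrow> bool" where
  "isn Lf = True"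
| "isn (Nd l x r) = (isn l \<and> isn r \<and> (l = Lf \<longrightarrow> r = Lf))"

primrec U :: "tr \<Rightarrow> nat set" where
  "U Lf = {}"
| "U (Nd l x r) = U l \<union> U r \<union> (if (l = Lf) \<noteq> (r = Lf) then {x} else {})"

primrec nb :: "tr \<Rightarrow> nat" where
  "nb Lf = 0"
| "nb (Nd l x r) = nb l + nb r + (if l \<noteq> Lf \<and> r \<noteq> Lf then 1 else 0)"

primrec ss :: "nat set \<Rightarrow> tr \<Rightarrow> tr" where
  "ss S Lf = Lf"
| "ss S (Nd l x r) = (if r = Lf \<and> x \<in> S then Nd Lf x (ss S l) else Nd (ss S l) x (ss S r))"

primrec dd :: "tr \<Rightarrow> nat set" where
  "dd Lf = {}"
| "dd (Nd l x r) = dd l \<union> dd r \<union> (if l = Lf \<and> r \<noteq> Lf then {x} else {})"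

primrec rn :: "tr \<Rightarrow> nat" where
  "rn Lf = 0"
| "rn (Nd l x r) = rn l + rn r + (if r \<noteq> Lf then 1 else 0)"

primrec good :: "tr \<Rightarrow> bool" where
  "good Lf = True"
| "good (Nd l x r) = (good l \<and> good r \<and> (\<forall>a\<in>set (io l). \<forall>b\<in>set (io r). a < b))"

lemma nrm_Lf: "nrm t = Lf \<longleftrightarrow> t = Lf" by (cases t) auto
lemma ss_Lf: "ss S t = Lf \<longleftrightarrow> t = Lf" by (cases t) auto

lemma lab_nrm: "set (io (nrm t)) = set (io t)" by (induction t) auto
lemma lab_ss: "set (io (ss S t)) = set (io t)" by (induction t) auto

lemma wft_nrm: "wft t \<Longrightarrow> wft (nrm t)" by (induction t) (auto simp: lab_nrm)
lemma wft_ss: "wft t \<Longrightarrow> wft (ss S t)" by (induction t) (auto simp: lab_ss)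
lemma isn_nrm: "isn (nrm t)" by (induction t) (auto simp: nrm_Lf)

lemma nrm_ss: "isn k \<Longrightarrow> nrm (ss S k) = k"
  by (induction k) (auto simp: ss_Lf)

lemma ss_cong: "(\<And>y. y \<in> set (io k) \<Longrightarrow> y \<in> S \<longleftrightarrow> y \<in> S') \<Longrightarrow> ss S k = ss S' k"
  by (induction k) auto

lemma U_lab: "U t \<subseteq> set (io t)" by (induction t) auto
lemma dd_lab: "dd t \<subseteq> set (io t)" by (induction t) auto
lemma dd_U: "dd t \<subseteq> U t" by (induction t) auto
lemma U_nrm: "U (nrm t) = U t" by (induction t) (auto simp: nrm_Lf)
lemma U_ss: "isn k \<Longrightarrow> U (ss S k) = U k" by (induction k) (auto simp: ss_Lf)
lemma nb_ss: "isn k \<Longrightarrow> nb (ss S k) = nb k" by (induction k) (auto simp: ss_Lf)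
lemma nb_nrm: "nb (nrm t) = nb t" by (induction t) (auto simp: nrm_Lf)

lemma ss_dd: "wft t \<Longrightarrow> ss (dd t) (nrm t) = t"
proof (induction t)
  case Lf then show ?case by simp
next
  case (Nd l x r)
  have dl: "ss (dd (Nd l x r)) (nrm l) = l"
  proof -
    have "ss (dd (Nd l x r)) (nrm l) = ss (dd l) (nrm l)"
    proof (rule ss_cong)
      fix y assume "y \<in> set (io (nrm l))"
      hence y: "y \<in> set (io l)" by (simp add: lab_nrm)
      have "y \<notin> dd r" using dd_lab[of r] y Nd.prems by auto
      moreover have "y \<noteq> x" using y Nd.prems by auto
      ultimately show "y \<in> dd (Nd l x r) \<longleftrightarrow> y \<in> dd l" by auto
    qed
    thus ?thesis using Nd by simp
  qed
  have dr: "ss (dd (Nd l x r)) (nrm r) = r"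
  proof -
    have "ss (dd (Nd l x r)) (nrm r) = ss (dd r) (nrm r)"
    proof (rule ss_cong)
      fix y assume "y \<in> set (io (nrm r))"
      hence y: "y \<in> set (io r)" by (simp add: lab_nrm)
      have "y \<notin> dd l" using dd_lab[of l] y Nd.prems by auto
      moreover have "y \<noteq> x" using y Nd.prems by auto
      ultimately show "y \<in> dd (Nd l x r) \<longleftrightarrow> y \<in> dd r" by auto
    qed
    thus ?thesis using Nd by simp
  qed
  have xl: "x \<notin> dd l" "x \<notin> dd r" using dd_lab[of l] dd_lab[of r] Nd.prems by auto
  show ?case
  proof (cases "l = Lf")
    case True
    thus ?thesis using dr xl by (cases "r = Lf") (auto simp: nrm_Lf)
  next
    case False
    thus ?thesis using dl dr xl by (cases "r = Lf") (auto simp: nrm_Lf)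
  qed
qed

lemma dd_ss: "isn k \<Longrightarrow> wft k \<Longrightarrow> dd (ss S k) = S \<inter> U k"
proof (induction k)
  case Lf then show ?case by simp
next
  case (Nd l x r)
  have xl: "x \<notin> U l" "x \<notin> U r" using U_lab[of l] U_lab[of r] Nd.prems by auto
  have dj: "U l \<inter> U r = {}" using U_lab[of l] U_lab[of r] Nd.prems by auto
  show ?case
  proof (cases "r = Lf")
    case True
    thus ?thesis using Nd xl by (cases "l = Lf") (auto simp: ss_Lf)
  next
    case False
    hence "l \<noteq> Lf" using Nd.prems by auto
    thus ?thesis using Nd False xl by (auto simp: ss_Lf)
  qed
qed

lemma rn_dd: "wft t \<Longrightarrow> rn t = nb t + card (dd t)"
proof (induction t)
  case Lf then show ?case by simp
next
  case (Nd l x r)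
  have xl: "x \<notin> dd l" "x \<notin> dd r" using dd_lab[of l] dd_lab[of r] Nd.prems by auto
  have dj: "dd l \<inter> dd r = {}" using dd_lab[of l] dd_lab[of r] Nd.prems by auto
  have fin: "finite (dd l)" "finite (dd r)"
    using dd_lab[of l] dd_lab[of r] finite_subset by auto
  have "card (dd l \<union> dd r) = card (dd l) + card (dd r)" using card_Un_disjoint[OF fin dj] .
  moreover have "card (dd l \<union> dd r \<union> {x}) = card (dd l \<union> dd r) + 1" using xl fin by simp
  ultimately show ?case using Nd by (auto simp: Un_commute)
qed

lemma card_lab: "wft t \<Longrightarrow> t \<noteq> Lf \<Longrightarrow> card (set (io t)) = 2 * nb t + card (U t) + 1"
proof (induction t)
  case Lf then show ?case by simp
next
  case (Nd l x r)
  have d: "distinct (io (Nd l x r))" using wft_distinct Nd.prems by blast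
  have c: "card (set (io (Nd l x r))) = length (io l) + length (io r) + 1" using distinct_card[OF d] by simp
  have cl: "card (set (io l)) = length (io l)" "card (set (io r)) = length (io r)"
    using d by (auto simp: distinct_card)
  have xl: "x \<notin> U l" "x \<notin> U r" using U_lab[of l] U_lab[of r] Nd.prems by auto
  have dj: "U l \<inter> U r = {}" using U_lab[of l] U_lab[of r] Nd.prems by auto
  have fin: "finite (U l)" "finite (U r)" using U_lab[of l] U_lab[of r] finite_subset by auto
  have cu: "card (U l \<union> U r) = card (U l) + card (U r)" using card_Un_disjoint[OF fin dj] .
  show ?case
  proof (cases "l = Lf")
    case True
    show ?thesis
    proof (cases "r = Lf")
      case True thus ?thesis using \<open>l = Lf\<close> by simp
    next
      case False
      have "card (U r \<union> {x}) = card (U r) + 1" using xl fin by simp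
      thus ?thesis using Nd False \<open>l = Lf\<close> c cl by (simp add: Un_commute)
    qed
  next
    case False
    show ?thesis
    proof (cases "r = Lf")
      case True
      have "card (U l \<union> {x}) = card (U l) + 1" using xl fin by simp
      thus ?thesis using Nd False \<open>r = Lf\<close> c cl by (simp add: Un_commute)
    next
      case False
      thus ?thesis using Nd \<open>l \<noteq> Lf\<close> c cl cu by simp
    qed
  qed
qed

lemma ldes_io: "wft t \<Longrightarrow> ldes (io t) = rn t"
proof (induction t)
  case Lf then show ?case by simp
next
  case (Nd l x r)
  have a: "ldes (io l @ x # io r) = ldes (io l) + ldes (x # io r)"
  proof -
    have "io l \<noteq> [] \<Longrightarrow> last (io l) < x" using Nd.prems by simp
    thus ?thesis using ldes_append[of "io l" "x # io r"] by auto
  qed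
  have b: "ldes (x # io r) = ldes (io r) + (if r \<noteq> Lf then 1 else 0)"
  proof -
    have "io r \<noteq> [] \<Longrightarrow> hd (io r) < x" using Nd.prems by simp
    thus ?thesis using ldes_append[of "[x]" "io r"] io_Lf[of r] by auto
  qed
  show ?case using a b Nd by simp
qed

lemma av_io: "wft t \<Longrightarrow> av (io t) \<longleftrightarrow> good t"
proof (induction t)
  case Lf then show ?case by (simp add: av_def)
next
  case (Nd l x r)
  have "av (io l @ x # io r) \<longleftrightarrow> av (io l) \<and> av (io r) \<and> (\<forall>a\<in>set (io l). \<forall>b\<in>set (io r). a < b)"
    by (rule av_split) (use Nd.prems wft_distinct in auto)
  thus ?case using Nd by simp
qed

lemma good_ss: "isn k \<Longrightarrow> good (ss S k) \<longleftrightarrow> good k"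
  by (induction k) (auto simp: lab_ss)

lemma flip:
  "isn k \<Longrightarrow> wft k \<Longrightarrow> y \<in> U k \<Longrightarrow> y \<notin> S \<Longrightarrow>
   \<exists>P A Q. io (ss S k) = P @ A @ y # Q \<and> io (ss (insert y S) k) = P @ y # A @ Q \<and> A \<noteq> [] \<and>
      (\<forall>z\<in>set A. z < y) \<and> (P = [] \<or> y < last P) \<and> (Q = [] \<or> y < hd Q)"
proof (induction k)
  case Lf then show ?case by simp
next
  case (Nd l x r)
  have ylab: "y \<in> set (io (Nd l x r))" using U_lab Nd.prems(3) by blast
  show ?case
  proof (cases "x = y")
    case True
    have nl: "y \<notin> U l" "y \<notin> U r" using U_lab[of l] U_lab[of r] Nd.prems True by auto
    hence un: "(l = Lf) \<noteq> (r = Lf)" using Nd.prems(3) by (auto split: if_splits)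
    hence lr: "l \<noteq> Lf" "r = Lf" using Nd.prems(1) by auto
    have c: "ss (insert y S) l = ss S l"
      by (rule ss_cong) (use Nd.prems True in auto)
    have 1: "io (ss S (Nd l x r)) = [] @ io (ss S l) @ y # []" using lr True Nd.prems(4) by simp
    have 2: "io (ss (insert y S) (Nd l x r)) = [] @ y # io (ss S l) @ []" using lr True c by simp
    have 3: "io (ss S l) \<noteq> []" using lr io_Lf ss_Lf by metis
    have 4: "\<forall>z\<in>set (io (ss S l)). z < y" using Nd.prems(2) True by (simp add: lab_ss)
    show ?thesis using 1 2 3 4 by blast
  next
    case xy: False
    have yU: "y \<in> U l \<or> y \<in> U r" using Nd.prems(3) xy by (auto split: if_splits)
    show ?thesis
    proof (cases "y \<in> U l")
      case True
      have yl: "y \<in> set (io l)" using U_lab True by blast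
      have yx: "y < x" using yl Nd.prems(2) by simp
      have ynr: "y \<notin> set (io r)" using yl Nd.prems(2) by auto
      have cr: "ss (insert y S) r = ss S r" by (rule ss_cong) (use ynr in auto)
      obtain P A Q where h: "io (ss S l) = P @ A @ y # Q" "io (ss (insert y S) l) = P @ y # A @ Q" "A \<noteq> []"
        "\<forall>z\<in>set A. z < y" "P = [] \<or> y < last P" "Q = [] \<or> y < hd Q"
        using Nd.IH(1) Nd.prems True by auto
      show ?thesis
      proof (cases "r = Lf \<and> x \<in> S")
        case True
        have 1: "io (ss S (Nd l x r)) = (x # P) @ A @ y # Q" using True h by simp
        have 2: "io (ss (insert y S) (Nd l x r)) = (x # P) @ y # A @ Q" using True h by simp
        have 3: "x # P = [] \<or> y < last (x # P)" using h(5) yx by auto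
        show ?thesis using 1 2 3 h by blast
      next
        case False
        hence F2: "\<not> (r = Lf \<and> x \<in> insert y S)" using xy by simp
        have s1: "ss S (Nd l x r) = Nd (ss S l) x (ss S r)" using False by auto
        have s2: "ss (insert y S) (Nd l x r) = Nd (ss (insert y S) l) x (ss (insert y S) r)" using F2 by auto
        have 1: "io (ss S (Nd l x r)) = P @ A @ y # (Q @ x # io (ss S r))" using s1 h by simp
        have 2: "io (ss (insert y S) (Nd l x r)) = P @ y # A @ (Q @ x # io (ss S r))" using s2 h cr by simp
        have 3: "Q @ x # io (ss S r) = [] \<or> y < hd (Q @ x # io (ss S r))" using h(6) yx by (cases Q) auto
        show ?thesis using 1 2 3 h by blast
      qed
    next
      case False
      hence yr: "y \<in> U r" using yU by simp
      have yrl: "y \<in> set (io r)" using U_lab yr by blast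
      have yx: "y < x" using yrl Nd.prems(2) by simp
      have ynl: "y \<notin> set (io l)" using yrl Nd.prems(2) by auto
      have rL: "r \<noteq> Lf" using yr by auto
      have cl: "ss (insert y S) l = ss S l" by (rule ss_cong) (use ynl in auto)
      obtain P A Q where h: "io (ss S r) = P @ A @ y # Q" "io (ss (insert y S) r) = P @ y # A @ Q" "A \<noteq> []"
        "\<forall>z\<in>set A. z < y" "P = [] \<or> y < last P" "Q = [] \<or> y < hd Q"
        using Nd.IH(2) Nd.prems yr by auto
      have 1: "io (ss S (Nd l x r)) = (io (ss S l) @ x # P) @ A @ y # Q" using rL h by simp
      have 2: "io (ss (insert y S) (Nd l x r)) = (io (ss S l) @ x # P) @ y # A @ Q" using rL h cl by simp
      have 3: "io (ss S l) @ x # P = [] \<or> y < last (io (ss S l) @ x # P)" using h(5) yx by auto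
      show ?thesis using 1 2 3 h by blast
    qed
  qed
qed

lemma F_nth: "1 \<le> t \<Longrightarrow> t \<le> length xs \<Longrightarrow> F xs t = xs ! (t - 1)" by (simp add: F_def)

lemma hop_lists:
  assumes d: "distinct (P @ A @ y # Q)" and s: "set (P @ A @ y # Q) = {1..n}" and A: "A \<noteq> []"
    and Ay: "\<forall>z\<in>set A. z < y" and Py: "P = [] \<or> y < last P" and Qy: "Q = [] \<or> y < hd Q"
  shows "hop n (F (P @ A @ y # Q)) (F (P @ y # A @ Q)) (length P + 1) (length P + length A + 1)"
proof -
  let ?L1 = "P @ A @ y # Q" and ?L2 = "P @ y # A @ Q"
  have d2: "distinct ?L2" using d by auto
  have s2: "set ?L2 = {1..n}" using s by auto
  have ln: "length ?L1 = n" using len_n[OF d s] .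
  have ln2: "length ?L2 = n" using ln by simp
  have e1: "\<And>i. i < length P \<Longrightarrow> ?L1 ! i = P ! i" "\<And>i. i < length P \<Longrightarrow> ?L2 ! i = P ! i"
    by (simp_all add: nth_append)
  have e2: "\<And>i. length P \<le> i \<Longrightarrow> i < length P + length A \<Longrightarrow> ?L1 ! i = A ! (i - length P)"
  proof -
    fix i assume "length P \<le> i" "i < length P + length A"
    hence "\<not> i < length P" "i - length P < length A" by arith+
    thus "?L1 ! i = A ! (i - length P)" by (simp add: nth_append)
  qed
  have e3: "\<And>i. length P < i \<Longrightarrow> i \<le> length P + length A \<Longrightarrow> ?L2 ! i = A ! (i - length P - 1)"
  proof -
    fix i assume "length P < i" "i \<le> length P + length A"
    then obtain j where j: "i = length P + Suc j" "j < length A" by (metis add_Suc_right less_add_Suc1 less_imp_Suc_add add_le_cancel_left Suc_le_eq)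
    thus "?L2 ! i = A ! (i - length P - 1)" by (simp add: nth_append)
  qed
  have e4: "?L1 ! (length P + length A) = y" "?L2 ! length P = y" by (simp_all add: nth_append)
  have e5: "\<And>i. length P + length A < i \<Longrightarrow> ?L1 ! i = Q ! (i - length P - length A - 1)"
           "\<And>i. length P + length A < i \<Longrightarrow> ?L2 ! i = Q ! (i - length P - length A - 1)"
  proof -
    fix i assume "length P + length A < i"
    then obtain j where j: "i = length P + length A + Suc j" by (metis less_imp_Suc_add add_Suc_right)
    show "?L1 ! i = Q ! (i - length P - length A - 1)" using j by (simp add: nth_append)
    show "?L2 ! i = Q ! (i - length P - length A - 1)" using j by (simp add: nth_append)
  qed
  show ?thesis
  proof
    show "F ?L1 permutes {1..n}" using F_perm[OF d s] .
    show "F ?L2 permutes {1..n}" using F_perm[OF d2 s2] .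
    show "1 \<le> length P + 1" by simp
    show "length P + 1 < length P + length A + 1" using A by simp
    show "length P + length A + 1 \<le> n" using ln by simp
    show "F ?L2 (length P + 1) = F ?L1 (length P + length A + 1)"
      using F_nth[of "length P + 1" ?L2] F_nth[of "length P + length A + 1" ?L1] ln e4 by simp
    show "F ?L2 t = F ?L1 (t - 1)" if "length P + 1 < t" "t \<le> length P + length A + 1" for t
    proof -
      have "F ?L2 t = ?L2 ! (t - 1)" using F_nth[of t ?L2] that ln by simp
      also have "\<dots> = A ! (t - 1 - length P - 1)" using e3[of "t - 1"] that by simp
      also have "\<dots> = ?L1 ! (t - 1 - 1)" using e2[of "t - 1 - 1"] that by simp
      also have "\<dots> = F ?L1 (t - 1)" using F_nth[of "t - 1" ?L1] that ln by simp
      finally show ?thesis .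
    qed
    show "F ?L2 t = F ?L1 t" if "t < length P + 1 \<or> length P + length A + 1 < t" for t
    proof (cases "1 \<le> t \<and> t \<le> n")
      case False thus ?thesis using ln by (auto simp: F_def)
    next
      case True
      have "F ?L2 t = ?L2 ! (t - 1)" "F ?L1 t = ?L1 ! (t - 1)" using F_nth True ln ln2 by auto
      moreover have "?L2 ! (t - 1) = ?L1 ! (t - 1)"
      proof (cases "t < length P + 1")
        case True
        hence "t - 1 < length P" using \<open>1 \<le> t \<and> t \<le> n\<close> by arith
        thus ?thesis using e1 by simp
      next
        case False
        hence "length P + length A < t - 1" using that by simp
        thus ?thesis using e5 by simp
      qed
      ultimately show ?thesis by simp
    qed
    show "F ?L1 t < F ?L1 (length P + length A + 1)" if "length P + 1 \<le> t" "t < length P + length A + 1" for t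
    proof -
      have "F ?L1 t = A ! (t - 1 - length P)" using F_nth[of t ?L1] e2[of "t - 1"] that ln by simp
      moreover have "t - 1 - length P < length A" using that by simp
      hence "A ! (t - 1 - length P) < y" using Ay nth_mem by blast
      moreover have "F ?L1 (length P + length A + 1) = y" using F_nth[of "length P + length A + 1" ?L1] ln e4 by simp
      ultimately show ?thesis by simp
    qed
    show "F ?L1 (length P + length A + 1) < F ?L1 (length P + 1 - 1)" if "1 < length P + 1"
    proof -
      have P: "P \<noteq> []" using that by auto
      have "1 \<le> length P" using P by (cases P) auto
      hence "F ?L1 (length P + 1 - 1) = ?L1 ! (length P - 1)" using F_nth[of "length P" ?L1] ln by simp
      also have "\<dots> = last P" using e1(1)[of "length P - 1"] P by (simp add: last_conv_nth)
      finally show ?thesis using Py P F_nth[of "length P + length A + 1" ?L1] ln e4 by simp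
    qed
    show "F ?L1 (length P + length A + 1) < F ?L1 (length P + length A + 1 + 1)" if "length P + length A + 1 < n"
    proof -
      have Q: "Q \<noteq> []" using that ln by auto
      have "F ?L1 (length P + length A + 1 + 1) = ?L1 ! (length P + length A + 1)"
        using F_nth[of "length P + length A + 1 + 1" ?L1] that ln by simp
      also have "\<dots> = hd Q" using e5(1)[of "length P + length A + 1"] Q by (simp add: hd_conv_nth)
      finally show ?thesis using Qy Q F_nth[of "length P + length A + 1" ?L1] ln e4 by simp
    qed
  qed
qed

definition KK :: "nat \<Rightarrow> tr set" where
  "KK n = {k. isn k \<and> wft k \<and> set (io k) = {1..n}}"

definition cls :: "tr \<Rightarrow> (nat \<Rightarrow> nat) set" where
  "cls k = {F (io (ss S k)) | S. S \<subseteq> U k}"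

lemma covers_sub: "covers P le u v \<Longrightarrow> P' \<subseteq> P \<Longrightarrow> u \<in> P' \<Longrightarrow> v \<in> P' \<Longrightarrow> covers P' le u v"
  unfolding covers_def by blast

context
  fixes n :: nat and k :: tr
  assumes kK: "k \<in> KK n"
begin

lemma kprops: "isn k" "wft k" "set (io k) = {1..n}" using kK by (auto simp: KK_def)

lemma ssprops: "distinct (io (ss S k))" "set (io (ss S k)) = {1..n}" "length (io (ss S k)) = n"
proof -
  show d: "distinct (io (ss S k))" using wft_distinct wft_ss kprops by blast
  show s: "set (io (ss S k)) = {1..n}" using lab_ss kprops by simp
  show "length (io (ss S k)) = n" using len_n[OF d s] .
qed

lemma ss_Sn: "F (io (ss S k)) \<in> Sn n" using F_perm[OF ssprops(1,2)] by (simp add: Sn_def)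

lemma ss_des: "S \<subseteq> U k \<Longrightarrow> des n (F (io (ss S k))) = nb k + card S"
proof -
  assume S: "S \<subseteq> U k"
  have "des n (F (io (ss S k))) = ldes (io (ss S k))" using des_F[OF ssprops(3)] .
  also have "\<dots> = rn (ss S k)" using ldes_io wft_ss kprops by blast
  also have "\<dots> = nb (ss S k) + card (dd (ss S k))" using rn_dd wft_ss kprops by blast
  also have "\<dots> = nb k + card S" using nb_ss dd_ss kprops S by (simp add: Int_absorb2)
  finally show ?thesis .
qed

lemma ss_av: "avoids231 n (F (io (ss S k))) \<longleftrightarrow> good k"
proof -
  have "avoids231 n (F (io (ss S k))) \<longleftrightarrow> av (io (ss S k))" using av_F[OF ssprops(3)] .
  also have "\<dots> \<longleftrightarrow> good (ss S k)" using av_io wft_ss kprops by blast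
  also have "\<dots> \<longleftrightarrow> good k" using good_ss kprops by blast
  finally show ?thesis .
qed

lemma ss_inj: "F (io (ss S1 k)) = F (io (ss S2 k)) \<Longrightarrow> S1 \<inter> U k = S2 \<inter> U k"
proof -
  assume "F (io (ss S1 k)) = F (io (ss S2 k))"
  hence "io (ss S1 k) = io (ss S2 k)" using F_inj ssprops(3) by metis
  hence "ss S1 k = ss S2 k" using io_inj wft_ss kprops by blast
  thus ?thesis using dd_ss kprops by metis
qed

lemma ss_cover:
  assumes S: "S \<subseteq> U k" and y: "y \<in> U k" "y \<notin> S"
  shows "covers (Sn n) (shard_le n) (F (io (ss S k))) (F (io (ss (insert y S) k)))"
proof -
  obtain P A Q where h: "io (ss S k) = P @ A @ y # Q" "io (ss (insert y S) k) = P @ y # A @ Q" "A \<noteq> []"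
      "\<forall>z\<in>set A. z < y" "P = [] \<or> y < last P" "Q = [] \<or> y < hd Q"
    using flip[OF kprops(1,2) y] by blast
  have "hop n (F (P @ A @ y # Q)) (F (P @ y # A @ Q)) (length P + 1) (length P + length A + 1)"
    by (rule hop_lists) (use h ssprops[of S] in auto)
  hence "covers (Sn n) (shard_le n) (F (P @ A @ y # Q)) (F (P @ y # A @ Q))" by (rule hop.cover)
  thus ?thesis using h by simp
qed

lemma class_ok:
  assumes n1: "1 \<le> n"
  shows "\<exists>j (\<rho> :: nat set \<Rightarrow> nat \<Rightarrow> nat). 2 * j \<le> n - 1 \<and> bij_betw \<rho> (Pow {..<n - 1 - 2 * j}) (cls k) \<and>
        (\<forall>S T. S \<subseteq> T \<and> T \<subseteq> {..<n - 1 - 2 * j} \<and> card T = card S + 1 \<longrightarrow> covers (Sn n) (shard_le n) (\<rho> S) (\<rho> T)) \<and>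
        (\<forall>S. S \<subseteq> {..<n - 1 - 2 * j} \<longrightarrow> des n (\<rho> S) = j + card S)"
proof -
  define d where "d = card (U k)"
  define j where "j = nb k"
  have kL: "k \<noteq> Lf" using kprops(3) n1 by auto
  have cn: "n = 2 * j + d + 1" using card_lab[OF kprops(2) kL] kprops(3) j_def d_def by simp
  have jj: "2 * j \<le> n - 1" "n - 1 - 2 * j = d" using cn by auto
  have finU: "finite (U k)" using U_lab[of k] kprops(3) finite_subset by auto
  obtain e where e: "bij_betw e {0..<d} (U k)" using ex_bij_betw_nat_finite[OF finU] d_def by blast
  have e': "bij_betw e {..<d} (U k)" using e by (simp add: lessThan_atLeast0)
  have inje: "inj_on e {..<d}" using e' bij_betw_imp_inj_on by blast
  have eim: "e ` {..<d} = U k" using e' bij_betw_imp_surj_on by blast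
  define \<rho> where "\<rho> T = F (io (ss (e ` T) k))" for T
  have sub: "\<And>T. T \<subseteq> {..<d} \<Longrightarrow> e ` T \<subseteq> U k" using eim by blast
  have bij: "bij_betw \<rho> (Pow {..<d}) (cls k)"
  proof (rule bij_betw_imageI)
    show "inj_on \<rho> (Pow {..<d})"
    proof (rule inj_onI)
      fix T1 T2 assume T: "T1 \<in> Pow {..<d}" "T2 \<in> Pow {..<d}" and eq: "\<rho> T1 = \<rho> T2"
      have "F (io (ss (e ` T1) k)) = F (io (ss (e ` T2) k))" using eq unfolding \<rho>_def .
      hence i: "e ` T1 \<inter> U k = e ` T2 \<inter> U k" by (rule ss_inj)
      have T1: "T1 \<subseteq> {..<d}" and T2: "T2 \<subseteq> {..<d}" using T by auto
      have q1: "e ` T1 \<inter> U k = e ` T1" using sub[OF T1] by blast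
      have q2: "e ` T2 \<inter> U k = e ` T2" using sub[OF T2] by blast
      have "e ` T1 = e ` T2" using i unfolding q1 q2 .
      thus "T1 = T2" using inj_on_image_eq_iff[OF inje T1 T2] by simp
    qed
    show "\<rho> ` Pow {..<d} = cls k"
    proof
      show "\<rho> ` Pow {..<d} \<subseteq> cls k"
      proof
        fix w assume "w \<in> \<rho> ` Pow {..<d}"
        then obtain T where T: "T \<subseteq> {..<d}" "w = \<rho> T" by blast
        have "e ` T \<subseteq> U k" using sub T by simp
        moreover have "w = F (io (ss (e ` T) k))" using T(2) unfolding \<rho>_def .
        ultimately show "w \<in> cls k" unfolding cls_def by blast
      qed
      show "cls k \<subseteq> \<rho> ` Pow {..<d}"
      proof
        fix w assume "w \<in> cls k"
        then obtain S where S: "S \<subseteq> U k" "w = F (io (ss S k))" unfolding cls_def by blast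
        define T where "T = {i \<in> {..<d}. e i \<in> S}"
        have "e ` T = S"
        proof
          show "e ` T \<subseteq> S" unfolding T_def by blast
          show "S \<subseteq> e ` T"
          proof
            fix y assume y: "y \<in> S"
            hence "y \<in> e ` {..<d}" using S eim by blast
            then obtain i where "i \<in> {..<d}" "y = e i" by blast
            thus "y \<in> e ` T" unfolding T_def using y by blast
          qed
        qed
        hence "w = \<rho> T" using S(2) unfolding \<rho>_def by simp
        moreover have "T \<in> Pow {..<d}" unfolding T_def by blast
        ultimately show "w \<in> \<rho> ` Pow {..<d}" by blast
      qed
    qed
  qed
  have cov: "\<forall>S T. S \<subseteq> T \<and> T \<subseteq> {..<d} \<and> card T = card S + 1 \<longrightarrow> covers (Sn n) (shard_le n) (\<rho> S) (\<rho> T)"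
  proof (intro allI impI)
    fix S T assume h: "S \<subseteq> T \<and> T \<subseteq> {..<d} \<and> card T = card S + 1"
    have fT: "finite T" using h finite_subset by blast
    have "card (T - S) = 1" using card_Diff_subset[of S T] h fT finite_subset by auto
    then obtain i where i: "T - S = {i}" using card_1_singletonE by blast
    hence T: "T = insert i S" "i \<notin> S" using h by auto
    have eT: "e ` T = insert (e i) (e ` S)" using T by simp
    have ei: "e i \<notin> e ` S" using inj_on_image_mem_iff[OF inje] T h by auto
    have eiU: "e i \<in> U k" using T h eim by blast
    have "covers (Sn n) (shard_le n) (F (io (ss (e ` S) k))) (F (io (ss (insert (e i) (e ` S)) k)))"
      by (rule ss_cover) (use sub h eiU ei in auto)
    thus "covers (Sn n) (shard_le n) (\<rho> S) (\<rho> T)" using \<rho>_def eT by simp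
  qed
  have rk: "\<forall>S. S \<subseteq> {..<d} \<longrightarrow> des n (\<rho> S) = j + card S"
  proof (intro allI impI)
    fix S assume S: "S \<subseteq> {..<d}"
    have "des n (\<rho> S) = nb k + card (e ` S)" using ss_des sub S \<rho>_def by simp
    also have "card (e ` S) = card S" using card_image inj_on_subset[OF inje S] by blast
    finally show "des n (\<rho> S) = j + card S" using j_def by simp
  qed
  show ?thesis using jj bij cov rk by (intro exI[of _ j] exI[of _ \<rho>]) simp
qed

end

lemma cls_sub: "k \<in> KK n \<Longrightarrow> cls k \<subseteq> Sn n"
  unfolding cls_def using ss_Sn by blast

lemma cls_ne: "k \<in> KK n \<Longrightarrow> cls k \<noteq> {}"
  unfolding cls_def by blast

lemma cover_all: assumes w: "w \<in> Sn n" shows "\<exists>k\<in>KK n. w \<in> cls k"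
proof -
  have wp: "w permutes {1..n}" using w by (simp add: Sn_def)
  define xs where "xs = map w [1..<n+1]"
  have xs: "distinct xs" "set xs = {1..n}" "F xs = w" using map_perm[OF wp] xs_def by auto
  obtain t where t: "wft t" "io t = xs" using ex_tree[OF xs(1)] by blast
  have kK: "nrm t \<in> KK n" unfolding KK_def using isn_nrm wft_nrm[OF t(1)] lab_nrm t xs by auto
  have "ss (dd t) (nrm t) = t" using ss_dd[OF t(1)] .
  moreover have "dd t \<subseteq> U (nrm t)" using dd_U U_nrm by metis
  ultimately have "w \<in> cls (nrm t)" unfolding cls_def using t xs by (metis (mono_tags, lifting) mem_Collect_eq)
  thus ?thesis using kK by blast
qed

lemma cls_disj: assumes k1: "k1 \<in> KK n" and k2: "k2 \<in> KK n" and w: "w \<in> cls k1" "w \<in> cls k2"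
  shows "k1 = k2"
proof -
  obtain S1 where S1: "w = F (io (ss S1 k1))" using w(1) unfolding cls_def by blast
  obtain S2 where S2: "w = F (io (ss S2 k2))" using w(2) unfolding cls_def by blast
  have "io (ss S1 k1) = io (ss S2 k2)" using F_inj[of "io (ss S1 k1)" "io (ss S2 k2)"] S1 S2
      ssprops(3)[OF k1] ssprops(3)[OF k2] by simp
  hence "ss S1 k1 = ss S2 k2" using io_inj wft_ss kprops(2)[OF k1] kprops(2)[OF k2] by blast
  thus ?thesis using nrm_ss kprops(1)[OF k1] kprops(1)[OF k2] by metis
qed

lemma cls_231: assumes k: "k \<in> KK n" shows "cls k \<subseteq> Sn231 n \<or> cls k \<inter> Sn231 n = {}"
proof (cases "good k")
  case True
  have "cls k \<subseteq> Sn231 n" unfolding cls_def Sn231_def using ss_Sn[OF k] ss_av[OF k] True by blast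
  thus ?thesis by blast
next
  case False
  have "cls k \<inter> Sn231 n = {}" unfolding cls_def Sn231_def using ss_av[OF k] False by blast
  thus ?thesis by blast
qed

theorem theorem1p2:
  fixes n :: nat
  assumes "n \<ge> 1"
  shows "\<exists>Q. sym_bool_decomp (Sn n) (shard_le n) (des n) (n - 1) Q \<and>
             (\<forall>A\<in>Q. A \<subseteq> Sn231 n \<or> A \<inter> Sn231 n = {}) \<and>
             sym_bool_decomp (Sn231 n) (shard_le n) (des n) (n - 1) {A\<in>Q. A \<subseteq> Sn231 n}"
proof -
  define Q where "Q = cls ` KK n"
  have un: "\<Union>Q = Sn n"
  proof
    show "\<Union>Q \<subseteq> Sn n" unfolding Q_def using cls_sub by blast
    show "Sn n \<subseteq> \<Union>Q" unfolding Q_def using cover_all by blast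
  qed
  have ne: "{} \<notin> Q" unfolding Q_def using cls_ne by blast
  have dj: "\<forall>A\<in>Q. \<forall>B\<in>Q. A \<noteq> B \<longrightarrow> A \<inter> B = {}"
  proof (intro ballI impI)
    fix A B assume A: "A \<in> Q" and B: "B \<in> Q" and AB: "A \<noteq> B"
    obtain k1 where k1: "k1 \<in> KK n" "A = cls k1" using A unfolding Q_def by blast
    obtain k2 where k2: "k2 \<in> KK n" "B = cls k2" using B unfolding Q_def by blast
    show "A \<inter> B = {}"
    proof (rule ccontr)
      assume "A \<inter> B \<noteq> {}"
      then obtain w where "w \<in> cls k1" "w \<in> cls k2" using k1 k2 by blast
      hence "k1 = k2" using cls_disj k1 k2 by blast
      thus False using AB k1 k2 by simp
    qed
  qed
  have cl: "\<forall>A\<in>Q. \<exists>j (\<rho> :: nat set \<Rightarrow> nat \<Rightarrow> nat). 2 * j \<le> n - 1 \<and> bij_betw \<rho> (Pow {..<n - 1 - 2 * j}) A \<and>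
        (\<forall>S T. S \<subseteq> T \<and> T \<subseteq> {..<n - 1 - 2 * j} \<and> card T = card S + 1 \<longrightarrow> covers (Sn n) (shard_le n) (\<rho> S) (\<rho> T)) \<and>
        (\<forall>S. S \<subseteq> {..<n - 1 - 2 * j} \<longrightarrow> des n (\<rho> S) = j + card S)"
  proof
    fix A assume "A \<in> Q"
    then obtain k where k: "k \<in> KK n" "A = cls k" unfolding Q_def by blast
    show "\<exists>j (\<rho> :: nat set \<Rightarrow> nat \<Rightarrow> nat). 2 * j \<le> n - 1 \<and> bij_betw \<rho> (Pow {..<n - 1 - 2 * j}) A \<and>
        (\<forall>S T. S \<subseteq> T \<and> T \<subseteq> {..<n - 1 - 2 * j} \<and> card T = card S + 1 \<longrightarrow> covers (Sn n) (shard_le n) (\<rho> S) (\<rho> T)) \<and>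
        (\<forall>S. S \<subseteq> {..<n - 1 - 2 * j} \<longrightarrow> des n (\<rho> S) = j + card S)"
      using class_ok[OF k(1) assms] k(2) by simp
  qed
  have h1: "sym_bool_decomp (Sn n) (shard_le n) (des n) (n - 1) Q"
    unfolding sym_bool_decomp_def by (intro conjI un ne dj cl)
  have h2: "\<forall>A\<in>Q. A \<subseteq> Sn231 n \<or> A \<inter> Sn231 n = {}" unfolding Q_def using cls_231 by blast
  define Q' where "Q' = {A\<in>Q. A \<subseteq> Sn231 n}"
  have un': "\<Union>Q' = Sn231 n"
  proof
    show "\<Union>Q' \<subseteq> Sn231 n" unfolding Q'_def by blast
    show "Sn231 n \<subseteq> \<Union>Q'"
    proof
      fix w assume w: "w \<in> Sn231 n"
      hence "w \<in> Sn n" by (simp add: Sn231_def)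
      then obtain A where A: "A \<in> Q" "w \<in> A" using un by blast
      hence "A \<subseteq> Sn231 n" using h2 w by blast
      thus "w \<in> \<Union>Q'" using A unfolding Q'_def by blast
    qed
  qed
  have ne': "{} \<notin> Q'" using ne unfolding Q'_def by blast
  have dj': "\<forall>A\<in>Q'. \<forall>B\<in>Q'. A \<noteq> B \<longrightarrow> A \<inter> B = {}" using dj unfolding Q'_def by blast
  have sub231: "Sn231 n \<subseteq> Sn n" by (auto simp: Sn231_def)
  have cl': "\<forall>A\<in>Q'. \<exists>j (\<rho> :: nat set \<Rightarrow> nat \<Rightarrow> nat). 2 * j \<le> n - 1 \<and> bij_betw \<rho> (Pow {..<n - 1 - 2 * j}) A \<and>
        (\<forall>S T. S \<subseteq> T \<and> T \<subseteq> {..<n - 1 - 2 * j} \<and> card T = card S + 1 \<longrightarrow> covers (Sn231 n) (shard_le n) (\<rho> S) (\<rho> T)) \<and>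
        (\<forall>S. S \<subseteq> {..<n - 1 - 2 * j} \<longrightarrow> des n (\<rho> S) = j + card S)"
  proof
    fix A assume A: "A \<in> Q'"
    hence AQ: "A \<in> Q" and A231: "A \<subseteq> Sn231 n" unfolding Q'_def by auto
    obtain j and \<rho> :: "nat set \<Rightarrow> nat \<Rightarrow> nat" where j: "2 * j \<le> n - 1" and b: "bij_betw \<rho> (Pow {..<n - 1 - 2 * j}) A"
      and c: "\<forall>S T. S \<subseteq> T \<and> T \<subseteq> {..<n - 1 - 2 * j} \<and> card T = card S + 1 \<longrightarrow> covers (Sn n) (shard_le n) (\<rho> S) (\<rho> T)"
      and r: "\<forall>S. S \<subseteq> {..<n - 1 - 2 * j} \<longrightarrow> des n (\<rho> S) = j + card S"
      using cl[rule_format, OF AQ] by blast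
    have inA: "\<And>S. S \<subseteq> {..<n - 1 - 2 * j} \<Longrightarrow> \<rho> S \<in> A" using bij_betw_apply[OF b] by blast
    have c': "\<forall>S T. S \<subseteq> T \<and> T \<subseteq> {..<n - 1 - 2 * j} \<and> card T = card S + 1 \<longrightarrow> covers (Sn231 n) (shard_le n) (\<rho> S) (\<rho> T)"
    proof (intro allI impI)
      fix S T assume h: "S \<subseteq> T \<and> T \<subseteq> {..<n - 1 - 2 * j} \<and> card T = card S + 1"
      have cv: "covers (Sn n) (shard_le n) (\<rho> S) (\<rho> T)" using c[rule_format, OF h] .
      have ST: "S \<subseteq> {..<n - 1 - 2 * j}" "T \<subseteq> {..<n - 1 - 2 * j}" using h by auto
      have i1: "\<rho> S \<in> Sn231 n" using inA[OF ST(1)] A231 by blast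
      have i2: "\<rho> T \<in> Sn231 n" using inA[OF ST(2)] A231 by blast
      show "covers (Sn231 n) (shard_le n) (\<rho> S) (\<rho> T)" by (rule covers_sub[OF cv sub231 i1 i2])
    qed
    show "\<exists>j (\<rho> :: nat set \<Rightarrow> nat \<Rightarrow> nat). 2 * j \<le> n - 1 \<and> bij_betw \<rho> (Pow {..<n - 1 - 2 * j}) A \<and>
        (\<forall>S T. S \<subseteq> T \<and> T \<subseteq> {..<n - 1 - 2 * j} \<and> card T = card S + 1 \<longrightarrow> covers (Sn231 n) (shard_le n) (\<rho> S) (\<rho> T)) \<and>
        (\<forall>S. S \<subseteq> {..<n - 1 - 2 * j} \<longrightarrow> des n (\<rho> S) = j + card S)"
      by (intro exI[of _ j] exI[of _ \<rho>] conjI j b c' r)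
  qed
  have h3: "sym_bool_decomp (Sn231 n) (shard_le n) (des n) (n - 1) Q'"
    unfolding sym_bool_decomp_def by (intro conjI un' ne' dj' cl')
  show ?thesis by (intro exI[of _ Q] conjI h1 h2) (use h3 in \<open>simp add: Q'_def\<close>)
qed

end
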